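(* Let $\mathbb{F}$ be a field of characteristic $0$, let $0\neq h\in\mathbb{F}[x]$, and let $A=A_h$ be the unital $\mathbb{F}$-algebra generated by $x$ and $\hat y$ subject to $\hat y x-x\hat y=h$. Then there are isomorphisms $$\mathrm{HH}^2(A)\cong A/\gcd(h,h')A\cong \mathsf{D}[\hat y],$$ where $\mathsf{D}=\mathbb{F}[x]/\gcd(h,h')\mathbb{F}[x]$. In particular, $\mathrm{HH}^2(A)=0$ if and only if $\gcd(h,h')=1$, i.e. if and only if $h$ is separable; otherwise $\mathrm{HH}^2(A)$ is infinite dimensional.
   Context: $h'$ is the derivative of $h$; $\gcd$ is monic. $\gcd(h,h')A$ is a two-sided ideal of $A$ (every factor of $h$ is a normal element of $A$). $\mathsf{D}[\hat y]$ denotes the polynomial ring in one variable $\hat y$ over $\mathsf{D}$. $\mathrm{HH}^2(A)$ is the second Hochschild cohomology of $A$ with coefficients in $A$. *)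

theory Defs
  imports "HOL-Computational_Algebra.Polynomial" "HOL-Computational_Algebra.Polynomial_Factorial"
begin

text \<open>The algebra A_h = F<x, y> / (y x - x y - h), modelled by its normal form:
  an element is a polynomial in y with coefficients in F[x] (left coefficients),
  i.e. sum_j p_j(x) y^j, stored as a term of type 'a poly poly.  The product is the
  Ore-extension product for the derivation d = h * d/dx:
  (p y^j)(q y^k) = sum_l (j choose l) p d^l(q) y^(j+k-l).\<close>

definition hder :: "'a::field poly \<Rightarrow> 'a poly \<Rightarrow> 'a poly" where
  "hder h p = h * pderiv p"

definition amult :: "'a::field poly \<Rightarrow> 'a poly poly \<Rightarrow> 'a poly poly \<Rightarrow> 'a poly poly" where
  "amult h a b = (\<Sum>j\<le>degree a. \<Sum>k\<le>degree b. \<Sum>l\<le>j.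
      monom (of_nat (j choose l) * coeff a j * (hder h ^^ l) (coeff b k)) (j + k - l))"

definition gen_x :: "'a::field poly poly" where "gen_x = [:[:0, 1:]:]"
definition gen_y :: "'a::field poly poly" where "gen_y = [:0, 1:]"
definition aone :: "'a::field poly poly" where "aone = 1"

definition ascal :: "'a::field \<Rightarrow> 'a poly poly \<Rightarrow> 'a poly poly" where
  "ascal c a = smult [:c:] a"

definition flinear :: "('a::field poly poly \<Rightarrow> 'a poly poly) \<Rightarrow> bool" where
  "flinear f \<longleftrightarrow> (\<forall>a b. f (a + b) = f a + f b) \<and> (\<forall>c a. f (ascal c a) = ascal c (f a))"

definition fbilinear :: "('a::field poly poly \<Rightarrow> 'a poly poly \<Rightarrow> 'a poly poly) \<Rightarrow> bool" where
  "fbilinear c \<longleftrightarrow> (\<forall>a. flinear (c a)) \<and> (\<forall>b. flinear (\<lambda>a. c a b))"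

definition hoch_cocycle2 :: "'a::field poly \<Rightarrow> ('a poly poly \<Rightarrow> 'a poly poly \<Rightarrow> 'a poly poly) \<Rightarrow> bool" where
  "hoch_cocycle2 h c \<longleftrightarrow> fbilinear c \<and>
     (\<forall>a b e. amult h a (c b e) - c (amult h a b) e + c a (amult h b e) - amult h (c a b) e = 0)"

definition hoch_coboundary2 :: "'a::field poly \<Rightarrow> ('a poly poly \<Rightarrow> 'a poly poly \<Rightarrow> 'a poly poly) \<Rightarrow> bool" where
  "hoch_coboundary2 h c \<longleftrightarrow> (\<exists>f. flinear f \<and>
     c = (\<lambda>a b. amult h a (f b) - f (amult h a b) + amult h (f a) b))"

definition HH2_zero :: "'a::field poly \<Rightarrow> bool" where
  "HH2_zero h \<longleftrightarrow> (\<forall>c. hoch_cocycle2 h c \<longrightarrow> hoch_coboundary2 h c)"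

definition HH2_infinite_dim :: "'a::field poly \<Rightarrow> bool" where
  "HH2_infinite_dim h \<longleftrightarrow> (\<forall>n. \<exists>cs :: nat \<Rightarrow> ('a poly poly \<Rightarrow> 'a poly poly \<Rightarrow> 'a poly poly).
      (\<forall>i<n. hoch_cocycle2 h (cs i)) \<and>
      (\<forall>k :: nat \<Rightarrow> 'a. hoch_coboundary2 h (\<lambda>a b. \<Sum>i<n. ascal (k i) (cs i a b))
           \<longrightarrow> (\<forall>i<n. k i = 0)))"

definition in_ideal :: "'a::field poly \<Rightarrow> 'a poly \<Rightarrow> 'a poly poly \<Rightarrow> bool" where
  "in_ideal h g a \<longleftrightarrow> (\<exists>b. a = amult h [:g:] b)"

text \<open>D[y] with D = F[x]/(g) is represented as the commutative ring F[x][y] modulo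
  the ideal g F[x][y]; this predicate is membership in that ideal.\<close>
definition in_Dker :: "'a::field poly \<Rightarrow> 'a poly poly \<Rightarrow> bool" where
  "in_Dker g p \<longleftrightarrow> [:g:] dvd p"

end

theory Submission imports Defs begin

lemma hder_0[simp]: "hder h 0 = 0" by (simp add: hder_def)
lemma hder_add: "hder h (p + q) = hder h p + hder h q" by (simp add: hder_def pderiv_add algebra_simps)
lemma hder_minus: "hder h (- p) = - hder h p" by (simp add: hder_def pderiv_minus)
lemma hder_diff: "hder h (p - q) = hder h p - hder h q" by (simp add: hder_def pderiv_diff algebra_simps)
lemma hder_mult: "hder h (p * q) = p * hder h q + hder h p * q"
  by (simp add: hder_def pderiv_mult algebra_simps)
lemma hder_const[simp]: "hder h [:c:] = 0" by (simp add: hder_def)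
lemma hder_1[simp]: "hder h 1 = 0" by (simp add: hder_def)
lemma hder_smult: "hder h (smult c p) = smult c (hder h p)" by (simp add: hder_def pderiv_smult)
lemma hder_of_nat_mult: "hder h (of_nat n * p) = of_nat n * hder h p"
  by (simp add: hder_mult) (simp add: hder_def pderiv_of_nat)
lemma hder_sum: "hder h (\<Sum>i\<in>S. f i) = (\<Sum>i\<in>S. hder h (f i))"
  by (induction S rule: infinite_finite_induct) (auto simp: hder_add)

lemma hderp_0[simp]: "(hder h ^^ l) 0 = 0" by (induction l) auto
lemma hderp_add: "(hder h ^^ l) (p + q) = (hder h ^^ l) p + (hder h ^^ l) q"
  by (induction l) (auto simp: hder_add)
lemma hderp_of_nat_mult: "(hder h ^^ l) (of_nat n * p) = of_nat n * (hder h ^^ l) p"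
  by (induction l) (auto simp: hder_of_nat_mult)

section \<open>The operator of left multiplication by y\<close>

definition Ly :: "'a::field poly \<Rightarrow> 'a poly poly \<Rightarrow> 'a poly poly" where
  "Ly h b = pCons 0 b + map_poly (hder h) b"

lemma coeff_Ly: "coeff (Ly h b) n = (case n of 0 \<Rightarrow> 0 | Suc m \<Rightarrow> coeff b m) + hder h (coeff b n)"
  by (simp add: Ly_def coeff_map_poly coeff_pCons)

lemma Ly_add: "Ly h (a + b) = Ly h a + Ly h b"
  by (rule poly_eqI) (simp add: coeff_Ly hder_add split: nat.split)
lemma Ly_0[simp]: "Ly h 0 = 0"
  by (rule poly_eqI) (simp add: coeff_Ly split: nat.split)
lemma Ly_minus: "Ly h (- a) = - Ly h a"
  by (rule poly_eqI) (simp add: coeff_Ly hder_minus split: nat.split)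
lemma Ly_diff: "Ly h (a - b) = Ly h a - Ly h b"
  by (rule poly_eqI) (simp add: coeff_Ly hder_diff split: nat.split)
lemma Ly_sum: "Ly h (\<Sum>i\<in>S. f i) = (\<Sum>i\<in>S. Ly h (f i))"
  by (induction S rule: infinite_finite_induct) (auto simp: Ly_add)
lemma Ly_monom: "Ly h (monom q n) = monom q (Suc n) + monom (hder h q) n"
  by (rule poly_eqI) (auto simp: coeff_Ly coeff_monom split: nat.split)
lemma Ly_smult: "Ly h (smult p z) = smult p (Ly h z) + smult (hder h p) z"
  by (rule poly_eqI) (auto simp: coeff_Ly hder_mult algebra_simps split: nat.split)
lemma Ly_pCons0: "Ly h (pCons 0 z) = pCons 0 (Ly h z)"
  by (rule poly_eqI) (auto simp: coeff_Ly coeff_pCons split: nat.split)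
lemma Ly_1: "Ly h 1 = monom 1 1"
  by (rule poly_eqI) (auto simp: coeff_Ly coeff_monom split: nat.split)

lemma Lyp_add: "(Ly h ^^ j) (a + b) = (Ly h ^^ j) a + (Ly h ^^ j) b"
  by (induction j) (auto simp: Ly_add)
lemma Lyp_0[simp]: "(Ly h ^^ j) 0 = 0"
  by (induction j) auto
lemma Lyp_minus: "(Ly h ^^ j) (- a) = - (Ly h ^^ j) a"
  by (induction j) (auto simp: Ly_minus)
lemma Lyp_diff: "(Ly h ^^ j) (a - b) = (Ly h ^^ j) a - (Ly h ^^ j) b"
  by (induction j) (auto simp: Ly_diff)
lemma Lyp_sum: "(Ly h ^^ j) (\<Sum>i\<in>S. f i) = (\<Sum>i\<in>S. (Ly h ^^ j) (f i))"
  by (induction S rule: infinite_finite_induct) (auto simp: Lyp_add)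
lemma Lyp_pCons0: "(Ly h ^^ j) (pCons 0 z) = pCons 0 ((Ly h ^^ j) z)"
  by (induction j) (auto simp: Ly_pCons0)
lemma Lyp_1: "(Ly h ^^ j) 1 = monom 1 j"
proof (induction j)
  case (Suc j)
  have "Ly h (monom 1 j) = monom 1 (Suc j)" by (simp add: Ly_monom)
  then show ?case using Suc by simp
qed simp

lemma degree_Ly: "degree (Ly h z) \<le> degree z + 1"
proof -
  have "coeff (Ly h z) n = 0" if "n > degree z + 1" for n
    using that by (auto simp: coeff_Ly coeff_eq_0 split: nat.split)
  then show ?thesis by (meson degree_le not_le)
qed
lemma degree_Lyp: "degree ((Ly h ^^ j) z) \<le> degree z + j"
proof (induction j)
  case (Suc j)
  then show ?case using degree_Ly[of h "(Ly h ^^ j) z"] by simp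
qed simp

lemma smult_sum_right: "smult c (\<Sum>i\<in>S. f i) = (\<Sum>i\<in>S. smult c (f i))"
  by (rule poly_eqI) (simp add: coeff_sum sum_distrib_left)

definition Wt :: "'a::field poly \<Rightarrow> nat \<Rightarrow> nat \<Rightarrow> 'a poly \<Rightarrow> 'a poly poly" where
  "Wt h j k q = (\<Sum>l\<le>j. monom (of_nat (j choose l) * (hder h ^^ l) q) (j + k - l))"

lemma Wt_Suc: "Ly h (Wt h j k q) = Wt h (Suc j) k q"
proof -
  define f where "f l = monom (of_nat (j choose l) * (hder h ^^ l) q) (Suc (j + k - l))" for l
  define g where "g l = monom (of_nat (j choose l) * (hder h ^^ (Suc l)) q) (j + k - l)" for l
  have "Ly h (Wt h j k q) = (\<Sum>l\<le>j. f l + g l)"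
    unfolding Wt_def Ly_sum f_def g_def
    by (rule sum.cong) (auto simp: Ly_monom hder_of_nat_mult)
  also have "\<dots> = (\<Sum>l\<le>j. f l) + (\<Sum>l\<le>j. g l)" by (simp add: sum.distrib)
  also have "(\<Sum>l\<le>j. f l) = (\<Sum>l\<le>Suc j. f l)" by (simp add: f_def binomial_eq_0)
  also have "\<dots> = f 0 + (\<Sum>l\<le>j. f (Suc l))" by (rule sum.atMost_Suc_shift)
  also have "(\<Sum>l\<le>j. f (Suc l)) = (\<Sum>l\<le>j. monom (of_nat (j choose Suc l) * (hder h ^^ (Suc l)) q) (j + k - l))"
  proof (rule sum.cong)
    fix l assume "l \<in> {..j}"
    then consider "l < j" | "l = j" by fastforce
    then show "f (Suc l) = monom (of_nat (j choose Suc l) * (hder h ^^ (Suc l)) q) (j + k - l)"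
    proof cases
      case 1 then have "Suc (j + k - Suc l) = j + k - l" by simp
      then show ?thesis by (simp add: f_def)
    qed (simp add: f_def binomial_eq_0)
  qed simp
  finally have 1: "Ly h (Wt h j k q) = f 0 + ((\<Sum>l\<le>j. monom (of_nat (j choose Suc l) * (hder h ^^ (Suc l)) q) (j + k - l)) + (\<Sum>l\<le>j. g l))"
    by (simp add: add.assoc)
  have "Wt h (Suc j) k q = monom (of_nat (Suc j choose 0) * (hder h ^^ 0) q) (Suc j + k - 0) + 
     (\<Sum>l\<le>j. monom (of_nat (Suc j choose Suc l) * (hder h ^^ (Suc l)) q) (Suc j + k - Suc l))"
    unfolding Wt_def by (rule sum.atMost_Suc_shift)
  also have "(\<Sum>l\<le>j. monom (of_nat (Suc j choose Suc l) * (hder h ^^ (Suc l)) q) (Suc j + k - Suc l))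
     = (\<Sum>l\<le>j. monom (of_nat (j choose Suc l) * (hder h ^^ (Suc l)) q) (j + k - l) + g l)"
    by (rule sum.cong) (auto simp: g_def add_monom[symmetric] algebra_simps)
  finally show ?thesis using 1 by (simp add: f_def sum.distrib)
qed

lemma Wt_0: "Wt h 0 k q = monom q k" by (simp add: Wt_def)

lemma Lyp_closed: "(Ly h ^^ j) b = (\<Sum>k\<le>degree b. Wt h j k (coeff b k))"
proof (induction j)
  case 0
  then show ?case by (simp add: Wt_0 poly_as_sum_of_monoms)
next
  case (Suc j)
  then show ?case by (simp add: Ly_sum Wt_Suc)
qed

definition lm :: "(nat \<Rightarrow> 'b::comm_ring_1 poly) \<Rightarrow> 'b poly \<Rightarrow> 'b poly" where
  "lm G a = (\<Sum>j\<le>degree a. smult (coeff a j) (G j))"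

lemma amult_lm: "amult h a b = lm (\<lambda>j. (Ly h ^^ j) b) a"
  unfolding amult_def lm_def Lyp_closed Wt_def
  by (intro sum.cong refl) (simp add: smult_sum_right smult_monom ac_simps)

lemma lm_bound: assumes "degree a \<le> N" shows "lm G a = (\<Sum>j\<le>N. smult (coeff a j) (G j))"
  unfolding lm_def
  by (rule sum.mono_neutral_left) (use assms in \<open>auto simp: coeff_eq_0\<close>)

lemma lm_add: "lm G (a + b) = lm G a + lm G b"
proof -
  define N where "N = max (degree a) (degree b)"
  have "degree (a + b) \<le> N" "degree a \<le> N" "degree b \<le> N"
    using degree_add_le_max[of a b] by (auto simp: N_def)
  then show ?thesis by (simp add: lm_bound[of _ N] sum.distrib smult_add_left)
qed

lemma lm_0[simp]: "lm G 0 = 0" by (simp add: lm_def)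
lemma lm_minus: "lm G (- a) = - lm G a"
  using lm_add[of G a "-a"] by (simp add: eq_neg_iff_add_eq_0 add.commute)
lemma lm_diff: "lm G (a - b) = lm G a - lm G b"
  using lm_add[of G a "-b"] by (simp add: lm_minus)
lemma lm_sum: "lm G (\<Sum>i\<in>S. f i) = (\<Sum>i\<in>S. lm G (f i))"
  by (induction S rule: infinite_finite_induct) (auto simp: lm_add)
lemma lm_smult: "lm G (smult p a) = smult p (lm G a)"
proof -
  have "lm G (smult p a) = (\<Sum>j\<le>degree a. smult (coeff (smult p a) j) (G j))"
    by (rule lm_bound) (rule degree_smult_le)
  then show ?thesis by (simp add: smult_sum_right lm_def)
qed
lemma lm_monom: "lm G (monom q k) = smult q (G k)"
proof -
  have "lm G (monom q k) = (\<Sum>j\<le>k. smult (coeff (monom q k) j) (G j))"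
    by (rule lm_bound) (simp add: degree_monom_le)
  also have "\<dots> = smult q (G k)"
    by (subst sum.remove[of _ k]) (auto simp: coeff_monom)
  finally show ?thesis .
qed
lemma lm_const: "lm G [:p:] = smult p (G 0)"
  using lm_monom[of G p 0] by (simp add: monom_0)
lemma lm_pCons0: "lm G (pCons 0 a) = lm (\<lambda>j. G (Suc j)) a"
proof -
  have "lm G (pCons 0 a) = (\<Sum>j\<le>Suc (degree a). smult (coeff (pCons 0 a) j) (G j))"
    by (rule lm_bound) (simp add: degree_pCons_le)
  also have "\<dots> = (\<Sum>j\<le>degree a. smult (coeff a j) (G (Suc j)))"
    by (subst sum.atMost_Suc_shift) simp
  finally show ?thesis by (simp add: lm_def)
qed
lemma lm_G_add: "lm (\<lambda>j. G j + H j) a = lm G a + lm H a"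
  by (simp add: lm_def smult_add_right sum.distrib)
lemma lm_G_diff: "lm (\<lambda>j. G j - H j) a = lm G a - lm H a"
  by (simp add: lm_def smult_diff_right sum_subtractf)
lemma lm_G_minus: "lm (\<lambda>j. - G j) a = - lm G a"
  by (simp add: lm_def sum_negf)
lemma lm_G_0[simp]: "lm (\<lambda>j. 0) a = 0"
  by (simp add: lm_def)
lemma lm_G_sum: "lm (\<lambda>j. \<Sum>i\<in>S. G i j) a = (\<Sum>i\<in>S. lm (G i) a)"
  by (induction S rule: infinite_finite_induct) (auto simp: lm_G_add)
lemma lm_G_pCons0: "lm (\<lambda>j. pCons 0 (G j)) a = pCons 0 (lm G a)"
proof -
  have [simp]: "pCons 0 (\<Sum>i\<in>S. f i) = (\<Sum>i\<in>S. pCons 0 (f i))" for S and f :: "nat \<Rightarrow> 'b::comm_ring_1 poly"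
    by (rule poly_eqI) (simp add: coeff_pCons coeff_sum split: nat.split)
  show ?thesis by (simp add: lm_def)
qed
lemma lm_monoms: "lm (\<lambda>j. monom 1 j) a = a"
  by (simp add: lm_def smult_monom poly_as_sum_of_monoms)
lemma lm_smult_const_G: "lm (\<lambda>j. smult c (G j)) a = smult c (lm G a)"
  by (simp add: lm_def smult_sum_right ac_simps)

lemma amult_add_left: "amult h (a + b) e = amult h a e + amult h b e"
  by (simp add: amult_lm lm_add)
lemma amult_add_right: "amult h a (b + e) = amult h a b + amult h a e"
  by (simp add: amult_lm Lyp_add lm_G_add)
lemma amult_0_left[simp]: "amult h 0 e = 0" by (simp add: amult_lm)
lemma amult_0_right[simp]: "amult h a 0 = 0" by (simp add: amult_lm)
lemma amult_minus_left: "amult h (- a) e = - amult h a e" by (simp add: amult_lm lm_minus)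
lemma amult_minus_right: "amult h a (- e) = - amult h a e" by (simp add: amult_lm Lyp_minus lm_G_minus)
lemma amult_diff_left: "amult h (a - b) e = amult h a e - amult h b e" by (simp add: amult_lm lm_diff)
lemma amult_diff_right: "amult h a (b - e) = amult h a b - amult h a e"
  by (simp add: amult_lm Lyp_diff lm_G_diff)
lemma amult_sum_left: "amult h (\<Sum>i\<in>S. f i) e = (\<Sum>i\<in>S. amult h (f i) e)"
  by (simp add: amult_lm lm_sum)
lemma amult_sum_right: "amult h a (\<Sum>i\<in>S. f i) = (\<Sum>i\<in>S. amult h a (f i))"
  by (simp add: amult_lm Lyp_sum lm_G_sum)
lemma amult_smult_left: "amult h (smult p a) e = smult p (amult h a e)"
  by (simp add: amult_lm lm_smult)
lemma amult_monom_left: "amult h (monom q k) b = smult q ((Ly h ^^ k) b)"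
  by (simp add: amult_lm lm_monom)
lemma amult_const_left: "amult h [:p:] b = smult p b"
  by (simp add: amult_lm lm_const)
lemma amult_1_left[simp]: "amult h 1 b = b"
  using amult_const_left[of h 1 b] by (simp add: pCons_one)
lemma amult_1_right[simp]: "amult h a 1 = a"
  by (simp add: amult_lm Lyp_1 lm_monoms)
lemma amult_pCons0_right: "amult h a (pCons 0 b) = pCons 0 (amult h a b)"
  by (simp add: amult_lm Lyp_pCons0 lm_G_pCons0)

lemma Ly_amult: "Ly h (amult h b e) = amult h (Ly h b) e"
proof -
  have 1: "lm (\<lambda>j. (Ly h ^^ j) e) (map_poly (hder h) b) = (\<Sum>j\<le>degree b. smult (hder h (coeff b j)) ((Ly h ^^ j) e))"
    by (subst lm_bound[of _ "degree b"]) (auto simp: map_poly_degree_leq coeff_map_poly)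
  have "Ly h (amult h b e) = (\<Sum>j\<le>degree b. smult (coeff b j) ((Ly h ^^ Suc j) e) + smult (hder h (coeff b j)) ((Ly h ^^ j) e))"
    by (simp add: amult_lm lm_def Ly_sum Ly_smult)
  also have "\<dots> = lm (\<lambda>j. (Ly h ^^ Suc j) e) b + (\<Sum>j\<le>degree b. smult (hder h (coeff b j)) ((Ly h ^^ j) e))"
    by (simp add: lm_def sum.distrib)
  also have "\<dots> = amult h (pCons 0 b) e + amult h (map_poly (hder h) b) e"
    by (simp only: 1 amult_lm lm_pCons0)
  also have "\<dots> = amult h (Ly h b) e" by (simp add: Ly_def amult_add_left)
  finally show ?thesis .
qed

lemma Lyp_amult: "(Ly h ^^ j) (amult h b e) = amult h ((Ly h ^^ j) b) e"
  by (induction j) (auto simp: Ly_amult)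

lemma amult_assoc: "amult h a (amult h b e) = amult h (amult h a b) e"
proof -
  have "amult h a (amult h b e) = lm (\<lambda>j. amult h ((Ly h ^^ j) b) e) a"
    by (simp add: amult_lm[of h a "amult h b e"] Lyp_amult)
  also have "\<dots> = amult h (amult h a b) e"
    by (simp add: amult_lm[of h a b] lm_def amult_sum_left amult_smult_left)
  finally show ?thesis .
qed

lemma degree_amult: "degree (amult h a b) \<le> degree a + degree b"
  unfolding amult_lm lm_def
proof (rule degree_sum_le)
  fix j assume "j \<in> {..degree a}"
  then show "degree (smult (coeff a j) ((Ly h ^^ j) b)) \<le> degree a + degree b"
    using degree_Lyp[where h=h and j=j and z=b] degree_smult_le[of "coeff a j" "(Ly h ^^ j) b"] by auto
qed simp

lemma Ly_smult_const: "Ly h (smult [:k:] z) = smult [:k:] (Ly h z)"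
  by (simp only: Ly_smult hder_const smult_0_left add_0_right)
lemma Lyp_smult_const: "(Ly h ^^ j) (smult [:k:] z) = smult [:k:] ((Ly h ^^ j) z)"
  by (induction j) (auto simp: Ly_smult_const)
lemma amult_ascal_left: "amult h (ascal k a) b = ascal k (amult h a b)"
  by (simp add: ascal_def amult_smult_left)
lemma amult_ascal_right: "amult h a (ascal k b) = ascal k (amult h a b)"
  by (simp add: ascal_def amult_lm Lyp_smult_const lm_smult_const_G)

lemma amult_smult_const_right: "amult h a (smult [:k:] b) = smult [:k:] (amult h a b)"
  using amult_ascal_right[of h a k b] by (simp add: ascal_def)

definition xp :: "nat \<Rightarrow> 'a::field poly poly" where "xp n = [:monom 1 n:]"
definition mnm :: "nat \<Rightarrow> nat \<Rightarrow> 'a::field poly poly" where "mnm n j = monom (monom 1 n) j"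

lemma gen_y_monom: "gen_y = monom 1 1" by (simp add: gen_y_def monom_Suc monom_0 pCons_one)
lemma gen_y_pCons: "gen_y = pCons 0 1" by (simp add: gen_y_def pCons_one)
lemma amult_gen_x_left: "amult h gen_x b = smult [:0,1:] b"
  by (simp add: gen_x_def amult_const_left)
lemma amult_gen_y_left: "amult h gen_y b = Ly h b"
  by (simp add: gen_y_monom amult_monom_left)
lemma amult_gen_y_right: "amult h a gen_y = pCons 0 a"
  by (simp add: gen_y_pCons amult_pCons0_right)
lemma amult_xp_left: "amult h (xp n) b = smult (monom 1 n) b"
  by (simp add: xp_def amult_const_left)
lemma amult_xp_xp: "amult h (xp m) (xp n) = xp (m + n)"
  unfolding amult_xp_left by (simp add: xp_def mult_monom)
lemma amult_gen_x_xp: "amult h gen_x (xp n) = xp (Suc n)"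
  by (simp add: amult_gen_x_left xp_def monom_Suc)
lemma xp_0: "xp 0 = 1" by (simp add: xp_def pCons_one)
lemma xp_1: "xp 1 = gen_x" by (simp add: xp_def gen_x_def monom_Suc monom_0 pCons_one)
lemma amult_mnm_gen_y: "amult h (mnm n j) gen_y = mnm n (Suc j)"
  by (simp add: amult_gen_y_right mnm_def monom_Suc)
lemma mnm_0: "mnm n 0 = xp n" by (simp add: mnm_def xp_def monom_0)
lemma hder_X: "hder h [:0,1:] = h" by (simp add: hder_def pderiv_pCons)
lemma gen_yx: "amult h gen_y gen_x = amult h gen_x gen_y + [:h:]"
proof -
  have "amult h gen_y gen_x = Ly h [:[:0,1:]:]" by (simp add: amult_gen_y_left gen_x_def)
  also have "\<dots> = pCons 0 [:[:0,1:]:] + [:h:]"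
    by (simp add: Ly_def hder_X map_poly_pCons)
  also have "pCons 0 [:[:0,1:]:] = amult h gen_x gen_y"
    by (simp add: amult_gen_y_right gen_x_def)
  finally show ?thesis .
qed

section \<open>Linear extension from monomials\<close>

lemma const_add: "[:a + b:] = [:a:] + [:b:]" by simp
lemma const_mult: "[:a * b:] = [:a:] * ([:b:] :: 'a::comm_ring_1 poly)" by simp
lemma smult_const_add: "smult [:a + b:] z = smult [:a:] z + smult [:b:] z"
  by (metis const_add smult_add_left)
lemma smult_const_mult: "smult [:a * b:] (z :: 'a::comm_ring_1 poly poly) = smult [:a:] (smult [:b:] z)"
  by (metis const_mult smult_smult)
lemma smult_const_1[simp]: "smult [:1:] (z :: 'a::comm_ring_1 poly poly) = z" by (metis one_pCons smult_1_left)
lemma smult_const_m1[simp]: "smult [:-1:] (z :: 'a::comm_ring_1 poly poly) = - z"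
proof -
  have m1: "[:-1:] = (-1 :: 'a poly)" by (metis one_pCons minus_pCons minus_zero)
  show ?thesis by (simp only: m1 smult_minus_left smult_1_left)
qed

definition lin1 :: "(nat \<Rightarrow> 'a::field poly poly) \<Rightarrow> 'a poly \<Rightarrow> 'a poly poly" where
  "lin1 G p = (\<Sum>n\<le>degree p. smult [:coeff p n:] (G n))"

lemma lin1_bound: assumes "degree p \<le> N" shows "lin1 G p = (\<Sum>n\<le>N. smult [:coeff p n:] (G n))"
  unfolding lin1_def
  by (rule sum.mono_neutral_left) (use assms in \<open>auto simp: coeff_eq_0\<close>)
lemma lin1_add: "lin1 G (p + q) = lin1 G p + lin1 G q"
proof -
  define N where "N = max (degree p) (degree q)"
  have "degree (p + q) \<le> N" "degree p \<le> N" "degree q \<le> N"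
    using degree_add_le_max[of p q] by (auto simp: N_def)
  then have "lin1 G (p + q) = (\<Sum>n\<le>N. smult [:coeff (p + q) n:] (G n))"
    "lin1 G p = (\<Sum>n\<le>N. smult [:coeff p n:] (G n))" "lin1 G q = (\<Sum>n\<le>N. smult [:coeff q n:] (G n))"
    by (simp_all only: lin1_bound)
  moreover have "(\<Sum>n\<le>N. smult [:coeff (p + q) n:] (G n)) = 
     (\<Sum>n\<le>N. smult [:coeff p n:] (G n) + smult [:coeff q n:] (G n))"
    by (rule sum.cong) (simp_all only: coeff_add smult_const_add)
  ultimately show ?thesis by (simp only: sum.distrib)
qed
lemma lin1_0[simp]: "lin1 G 0 = 0" by (simp add: lin1_def)
lemma lin1_smult: "lin1 G (smult c p) = smult [:c:] (lin1 G p)"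
proof -
  have "lin1 G (smult c p) = (\<Sum>n\<le>degree p. smult [:coeff (smult c p) n:] (G n))"
    by (rule lin1_bound) (rule degree_smult_le)
  also have "\<dots> = (\<Sum>n\<le>degree p. smult [:c:] (smult [:coeff p n:] (G n)))"
    by (rule sum.cong) (simp_all only: coeff_smult smult_const_mult)
  finally show ?thesis by (simp only: smult_sum_right lin1_def)
qed
lemma lin1_monom: "lin1 G (monom c k) = smult [:c:] (G k)"
proof -
  have "lin1 G (monom c k) = (\<Sum>n\<le>k. smult [:coeff (monom c k) n:] (G n))"
    by (rule lin1_bound) (simp add: degree_monom_le)
  also have "\<dots> = smult [:c:] (G k)"
    by (subst sum.remove[of _ k]) (auto simp: coeff_monom)
  finally show ?thesis .
qed

definition ext2 :: "(nat \<Rightarrow> nat \<Rightarrow> 'a::field poly poly) \<Rightarrow> 'a poly poly \<Rightarrow> 'a poly poly" where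
  "ext2 F a = (\<Sum>j\<le>degree a. lin1 (\<lambda>n. F n j) (coeff a j))"

lemma ext2_bound: assumes "degree a \<le> N" shows "ext2 F a = (\<Sum>j\<le>N. lin1 (\<lambda>n. F n j) (coeff a j))"
  unfolding ext2_def
  by (rule sum.mono_neutral_left) (use assms in \<open>auto simp: coeff_eq_0\<close>)
lemma ext2_add: "ext2 F (a + b) = ext2 F a + ext2 F b"
proof -
  define N where "N = max (degree a) (degree b)"
  have "degree (a + b) \<le> N" "degree a \<le> N" "degree b \<le> N"
    using degree_add_le_max[of a b] by (auto simp: N_def)
  then show ?thesis by (simp add: ext2_bound[of _ N] sum.distrib lin1_add)
qed
lemma ext2_ascal: "ext2 F (ascal c a) = ascal c (ext2 F a)"
proof -
  have "ext2 F (ascal c a) = (\<Sum>j\<le>degree a. lin1 (\<lambda>n. F n j) (coeff (ascal c a) j))"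
    by (rule ext2_bound) (simp add: ascal_def degree_smult_le)
  then show ?thesis by (simp add: ascal_def lin1_smult smult_sum_right ext2_def)
qed
lemma flinear_ext2: "flinear (ext2 F)"
  by (simp add: flinear_def ext2_add ext2_ascal)
lemma ext2_mnm: "ext2 F (mnm n j) = F n j"
proof -
  have "ext2 F (mnm n j) = (\<Sum>i\<le>j. lin1 (\<lambda>n. F n i) (coeff (mnm n j) i))"
    by (rule ext2_bound) (simp add: mnm_def degree_monom_le)
  also have "\<dots> = lin1 (\<lambda>n. F n j) (monom 1 n)"
    by (subst sum.remove[of _ j]) (auto simp: mnm_def coeff_monom)
  also have "\<dots> = F n j" by (simp add: lin1_monom)
  finally show ?thesis .
qed

lemma flinear_0: "flinear f \<Longrightarrow> f 0 = 0"
proof -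
  assume "flinear f"
  then have "f (0 + 0) = f 0 + f 0" unfolding flinear_def by blast
  then show "f 0 = 0" by (metis add.right_neutral add_left_cancel)
qed
lemma flinear_sum: "flinear f \<Longrightarrow> f (\<Sum>i\<in>S. g i) = (\<Sum>i\<in>S. f (g i))"
  by (induction S rule: infinite_finite_induct) (auto simp: flinear_0 flinear_def)
lemma flinear_ascal: "flinear f \<Longrightarrow> f (ascal c a) = ascal c (f a)"
  unfolding flinear_def by blast
lemma flinear_add: "flinear f \<Longrightarrow> f (a + b) = f a + f b"
  unfolding flinear_def by blast
lemma flinear_minus: "flinear f \<Longrightarrow> f (- a) = - f a"
  using flinear_ascal[of f "-1" a] by (simp add: ascal_def)
lemma flinear_diff: "flinear f \<Longrightarrow> f (a - b) = f a - f b"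
  using flinear_add[of f a "-b"] flinear_minus[of f b] by simp

lemma ct: "[:c:] * monom 1 n = monom (c::'a::comm_semiring_1) n"
  by (metis monom_0 mult_monom mult.right_neutral add_0)

lemma lin1_mnm: "lin1 (\<lambda>n. mnm n j) p = monom p j"
proof -
  have "lin1 (\<lambda>n. mnm n j) p = (\<Sum>n\<le>degree p. monom (monom (coeff p n) n) j)"
    unfolding lin1_def by (rule sum.cong) (simp_all only: mnm_def smult_monom ct)
  also have "\<dots> = monom p j"
    by (simp only: monom_sum[symmetric] poly_as_sum_of_monoms)
  finally show ?thesis .
qed

lemma ext2_mono_id: "ext2 mnm a = a"
  unfolding ext2_def lin1_mnm by (simp add: poly_as_sum_of_monoms)

lemma flinear_ext2_comm: assumes "flinear f" shows "f (ext2 F a) = ext2 (\<lambda>n j. f (F n j)) a"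
proof -
  have "f (lin1 G p) = lin1 (\<lambda>n. f (G n)) p" for G p
    using assms by (simp add: lin1_def flinear_sum flinear_ascal[unfolded ascal_def])
  then show ?thesis using assms by (simp add: ext2_def flinear_sum)
qed

lemma flinear_unique: assumes "flinear f" shows "f a = ext2 (\<lambda>n j. f (mnm n j)) a"
  using flinear_ext2_comm[OF assms, of mnm a] by (simp add: ext2_mono_id)

lemma flinear_eqI: assumes "flinear f" "flinear g" "\<And>n j. f (mnm n j) = g (mnm n j)"
  shows "f a = g a"
proof -
  have "f a = ext2 (\<lambda>n j. f (mnm n j)) a" by (rule flinear_unique[OF assms(1)])
  also have "\<dots> = ext2 (\<lambda>n j. g (mnm n j)) a" using assms(3) by simp
  also have "\<dots> = g a" by (rule flinear_unique[OF assms(2), symmetric])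
  finally show ?thesis .
qed

definition cob :: "'a::field poly \<Rightarrow> ('a poly poly \<Rightarrow> 'a poly poly) \<Rightarrow> 'a poly poly \<Rightarrow> 'a poly poly \<Rightarrow> 'a poly poly" where
  "cob h f = (\<lambda>a b. amult h a (f b) - f (amult h a b) + amult h (f a) b)"

definition cocid :: "'a::field poly \<Rightarrow> ('a poly poly \<Rightarrow> 'a poly poly \<Rightarrow> 'a poly poly) \<Rightarrow> bool" where
  "cocid h c \<longleftrightarrow> (\<forall>a b e. amult h a (c b e) - c (amult h a b) e + c a (amult h b e) - amult h (c a b) e = 0)"

lemma cocycle_iff: "hoch_cocycle2 h c \<longleftrightarrow> fbilinear c \<and> cocid h c"
  by (simp add: hoch_cocycle2_def cocid_def)

lemma coboundary_iff: "hoch_coboundary2 h c \<longleftrightarrow> (\<exists>f. flinear f \<and> c = cob h f)"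
  by (simp add: hoch_coboundary2_def cob_def)

lemma cocid_cob: "cocid h (cob h f)"
  unfolding cocid_def cob_def
  by (simp add: amult_diff_left amult_diff_right amult_add_left amult_add_right amult_assoc algebra_simps)

lemma cocid_diff: "cocid h c \<Longrightarrow> cocid h c' \<Longrightarrow> cocid h (\<lambda>a b. c a b - c' a b)"
  unfolding cocid_def
proof (intro allI)
  fix a b e
  assume 1: "\<forall>a b e. amult h a (c b e) - c (amult h a b) e + c a (amult h b e) - amult h (c a b) e = 0"
    and 2: "\<forall>a b e. amult h a (c' b e) - c' (amult h a b) e + c' a (amult h b e) - amult h (c' a b) e = 0"
  have "amult h a (c b e - c' b e) - (c (amult h a b) e - c' (amult h a b) e) + (c a (amult h b e) - c' a (amult h b e)) -
        amult h (c a b - c' a b) e = 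
     (amult h a (c b e) - c (amult h a b) e + c a (amult h b e) - amult h (c a b) e) -
     (amult h a (c' b e) - c' (amult h a b) e + c' a (amult h b e) - amult h (c' a b) e)"
    by (simp add: amult_diff_left amult_diff_right algebra_simps)
  then show "amult h a (c b e - c' b e) - (c (amult h a b) e - c' (amult h a b) e) + (c a (amult h b e) - c' a (amult h b e)) -
        amult h (c a b - c' a b) e = 0" using 1 2 by simp
qed

lemma cocidD: "cocid h c \<Longrightarrow> amult h a (c b e) - c (amult h a b) e + c a (amult h b e) - amult h (c a b) e = 0"
  unfolding cocid_def by blast

lemma flinear_cong: "flinear f \<Longrightarrow> (\<And>a. g a = f a) \<Longrightarrow> flinear g"
  by (simp add: flinear_def)

lemma flinear_diff_fun: "flinear f \<Longrightarrow> flinear g \<Longrightarrow> flinear (\<lambda>a. f a - g a)"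
  unfolding flinear_def ascal_def by (simp add: smult_diff_right)
lemma flinear_add_fun: "flinear f \<Longrightarrow> flinear g \<Longrightarrow> flinear (\<lambda>a. f a + g a)"
  unfolding flinear_def ascal_def by (simp add: smult_add_right)
lemma flinear_minus_fun: "flinear f \<Longrightarrow> flinear (\<lambda>a. - f a)"
  unfolding flinear_def ascal_def by simp
lemma flinear_comp: "flinear f \<Longrightarrow> flinear g \<Longrightarrow> flinear (\<lambda>a. f (g a))"
  unfolding flinear_def by simp
lemma flinear_amult_left: "flinear (\<lambda>a. amult h a b)"
  unfolding flinear_def by (simp add: amult_add_left amult_ascal_left)
lemma flinear_amult_right: "flinear (\<lambda>b. amult h a b)"
  unfolding flinear_def by (simp add: amult_add_right amult_ascal_right)
lemma flinear_id: "flinear (\<lambda>a. a)"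
  unfolding flinear_def by simp

lemma fbilinear_cob: assumes "flinear f" shows "fbilinear (cob h f)"
proof -
  have "flinear (\<lambda>b. amult h a (f b) - f (amult h a b) + amult h (f a) b)" for a
    by (intro flinear_add_fun flinear_diff_fun flinear_comp[OF flinear_amult_right assms]
        flinear_comp[OF assms flinear_amult_right] flinear_amult_right)
  moreover have "flinear (\<lambda>a. amult h a (f b) - f (amult h a b) + amult h (f a) b)" for b
    by (intro flinear_add_fun flinear_diff_fun flinear_comp[OF flinear_amult_left assms]
        flinear_comp[OF assms flinear_amult_left] flinear_amult_left)
  ultimately show ?thesis by (simp add: fbilinear_def cob_def)
qed

lemma fbilinear_diff: "fbilinear c \<Longrightarrow> fbilinear c' \<Longrightarrow> fbilinear (\<lambda>a b. c a b - c' a b)"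
  unfolding fbilinear_def by (simp add: flinear_diff_fun)

lemma fbilinearD1: "fbilinear c \<Longrightarrow> flinear (\<lambda>a. c a b)" by (simp add: fbilinear_def)
lemma fbilinearD2: "fbilinear c \<Longrightarrow> flinear (c a)" by (simp add: fbilinear_def)

section \<open>The obstruction and the small complex\<close>

definition Nop :: "'a::field poly \<Rightarrow> 'a poly poly \<Rightarrow> 'a poly poly" where
  "Nop h u = (\<Sum>n\<le>degree h. \<Sum>i<n. smult (monom (coeff h n) (n - 1 - i)) (amult h u (xp i)))"

definition Ob :: "'a::field poly \<Rightarrow> ('a poly poly \<Rightarrow> 'a poly poly \<Rightarrow> 'a poly poly) \<Rightarrow> 'a poly poly" where
  "Ob h c = c gen_y gen_x - c gen_x gen_y -
     (\<Sum>n\<le>degree h. \<Sum>i<n. smult (monom (coeff h n) (n - 1 - i)) (c gen_x (xp i)))"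

definition d1 :: "'a::field poly \<Rightarrow> 'a poly poly \<Rightarrow> 'a poly poly \<Rightarrow> 'a poly poly" where
  "d1 h u v = amult h gen_y u - amult h u gen_y + amult h v gen_x - amult h gen_x v - Nop h u"

lemma const_as_xp: "[:r:] = (\<Sum>n\<le>degree r. ascal (coeff r n) (xp n))"
proof -
  have "[:r:] = monom (\<Sum>n\<le>degree r. monom (coeff r n) n) 0"
    by (simp only: poly_as_sum_of_monoms monom_0)
  also have "\<dots> = (\<Sum>n\<le>degree r. monom (monom (coeff r n) n) 0)"
    by (simp only: monom_sum)
  also have "\<dots> = (\<Sum>n\<le>degree r. ascal (coeff r n) (xp n))"
    by (rule sum.cong) (simp_all only: ascal_def xp_def smult_pCons smult_0_right ct monom_0)
  finally show ?thesis .
qed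

lemma gen_y_mnm: "gen_y = mnm 0 1" by (simp add: mnm_def gen_y_monom)
lemma one_mnm: "1 = mnm 0 0" by (simp add: mnm_def)
lemma gen_x_mnm: "gen_x = mnm 1 0" by (metis mnm_0 xp_1)
lemma xy_mnm: "amult h gen_x gen_y = mnm 1 1"
  by (simp add: amult_gen_y_right mnm_def gen_x_def monom_Suc monom_0)

lemma X_monom: "[:0, 1:] = (monom 1 1 :: 'a::comm_semiring_1 poly)"
  by (simp add: monom_Suc monom_0)

lemma ascal_0[simp]: "ascal k 0 = 0" by (simp add: ascal_def)

locale thmA =
  fixes h :: "'a::field poly" and c and u v :: "'a poly poly"
  assumes coc: "hoch_cocycle2 h c"
    and n1: "\<And>a. c a 1 = 0" and n2: "\<And>b. c 1 b = 0"
    and rel: "Ob h c + d1 h u v = 0"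
begin

definition phi0 :: "nat \<Rightarrow> 'a poly poly" where
  "phi0 n = (\<Sum>i<n. smult (monom 1 (n - 1 - i)) (amult h u (xp i) + c gen_x (xp i)))"

primrec phim :: "nat \<Rightarrow> nat \<Rightarrow> 'a poly poly" where
  "phim n 0 = phi0 n"
| "phim n (Suc j) = amult h (phim n j) gen_y + amult h (mnm n j) v + c (mnm n j) gen_y"

definition phi :: "'a poly poly \<Rightarrow> 'a poly poly" where "phi = ext2 phim"

definition D :: "'a poly poly \<Rightarrow> 'a poly poly \<Rightarrow> 'a poly poly" where
  "D = (\<lambda>a b. cob h (\<lambda>z. - phi z) a b - c a b)"

lemma phi_lin: "flinear phi" by (simp add: phi_def flinear_ext2)
lemma phi_mnm: "phi (mnm n j) = phim n j" by (simp add: phi_def ext2_mnm)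

lemma c_bil: "fbilinear c" using coc by (simp add: cocycle_iff)
lemma c_cocid: "cocid h c" using coc by (simp add: cocycle_iff)

lemma D_bil: "fbilinear D"
  unfolding D_def by (intro fbilinear_diff fbilinear_cob flinear_minus_fun phi_lin c_bil)
lemma D_cocid: "cocid h D"
  unfolding D_def by (intro cocid_diff cocid_cob c_cocid)
lemma D_expl: "D a b = phi (amult h a b) - amult h a (phi b) - amult h (phi a) b - c a b"
  by (simp add: D_def cob_def amult_minus_left amult_minus_right)

lemma DL: "flinear (\<lambda>a. D a b)" using D_bil by (simp add: fbilinearD1)
lemma DR: "flinear (D a)" using D_bil by (simp add: fbilinearD2)
lemma DI: "amult h a (D b e) - D (amult h a b) e + D a (amult h b e) - amult h (D a b) e = 0"
  using D_cocid by (rule cocidD)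

lemma phi0_0: "phi0 0 = 0" by (simp add: phi0_def)
lemma phi_1: "phi 1 = 0" by (simp add: one_mnm phi_mnm phi0_0)
lemma phi_y: "phi gen_y = v"
  by (simp add: gen_y_mnm phi_mnm phi0_0 flip: one_mnm) (simp add: n2)
lemma phi0_1: "phi0 1 = u"
proof -
  have "phi0 1 = smult (monom 1 0) (amult h u (xp 0) + c gen_x (xp 0))" unfolding phi0_def by simp
  also have "\<dots> = u" by (simp add: xp_0 n1 monom_0)
  finally show ?thesis .
qed
lemma phi0_1': "phi0 (Suc 0) = u" using phi0_1 by simp
lemma phi_x: "phi gen_x = u" by (simp add: gen_x_mnm phi_mnm phi0_1 phi0_1')
lemma phi_xp: "phi (xp n) = phi0 n" by (simp add: phi_mnm flip: mnm_0)

lemma smult_monom10[simp]: "smult (monom 1 0) (z :: 'b::comm_ring_1 poly poly) = z"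
  by (simp add: monom_0)

lemma phi0_Suc: "phi0 (Suc n) = amult h gen_x (phi0 n) + (amult h u (xp n) + c gen_x (xp n))"
proof -
  have "phi0 (Suc n) = (\<Sum>i<n. smult (monom 1 (n - i)) (amult h u (xp i) + c gen_x (xp i)))
     + smult (monom 1 0) (amult h u (xp n) + c gen_x (xp n))"
    unfolding phi0_def by (simp only: sum.lessThan_Suc diff_Suc_1 diff_self_eq_0)
  also have "(\<Sum>i<n. smult (monom 1 (n - i)) (amult h u (xp i) + c gen_x (xp i)))
     = amult h gen_x (phi0 n)"
    unfolding amult_gen_x_left phi0_def smult_sum_right
  proof (rule sum.cong)
    fix i assume "i \<in> {..<n}"
    then have "n - i = 1 + (n - 1 - i)" by auto
    then have "monom 1 (n - i) = [:0, 1:] * monom (1::'a) (n - 1 - i)"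
      by (simp only: X_monom mult_monom mult_1)
    then show "smult (monom 1 (n - i)) (amult h u (xp i) + c gen_x (xp i)) =
          smult [:0, 1:] (smult (monom 1 (n - 1 - i)) (amult h u (xp i) + c gen_x (xp i)))"
      by (simp only: smult_smult)
  qed simp
  finally show ?thesis by (simp only: smult_monom10)
qed

lemma S1: "D a gen_y = 0"
proof -
  have "D (mnm n j) gen_y = 0" for n j
    by (simp add: D_expl amult_mnm_gen_y phi_mnm phi_y)
  then show ?thesis using flinear_eqI[OF DL, of "\<lambda>_. 0"] by (simp add: flinear_def ascal_def)
qed

lemma S2: "D a 1 = 0" by (simp add: D_expl phi_1 n1)

lemma S3: "D a (amult h b gen_y) = amult h (D a b) gen_y"
  using DI[of a b gen_y] by (simp add: S1)

lemma S4: "D gen_x (xp n) = 0"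
  by (simp add: D_expl amult_gen_x_xp phi_xp phi_x phi0_Suc)

lemma D1: "D 1 e = 0"
  using DI[of 1 1 e] by (simp add: S2)

lemma S5: "D (xp i) gen_x = 0"
proof (induction i)
  case 0 then show ?case by (simp add: xp_0 D1)
next
  case (Suc i)
  have "amult h (xp i) gen_x = xp (Suc i)" by (simp add: amult_xp_xp flip: xp_1)
  then show ?case using DI[of gen_x "xp i" gen_x] Suc by (simp add: S4 amult_gen_x_xp)
qed

lemma phi_h: "phi [:h:] = Nop h u + (\<Sum>n\<le>degree h. \<Sum>i<n. smult (monom (coeff h n) (n - 1 - i)) (c gen_x (xp i)))"
proof -
  have "phi [:h:] = (\<Sum>n\<le>degree h. ascal (coeff h n) (phi0 n))"
    by (subst const_as_xp) (simp add: flinear_sum[OF phi_lin] flinear_ascal[OF phi_lin] phi_xp)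
  also have "\<dots> = (\<Sum>n\<le>degree h. (\<Sum>i<n. smult (monom (coeff h n) (n - 1 - i)) (amult h u (xp i))) +
        (\<Sum>i<n. smult (monom (coeff h n) (n - 1 - i)) (c gen_x (xp i))))"
    by (rule sum.cong) (simp_all add: ascal_def phi0_def smult_sum_right smult_smult ct smult_add_right sum.distrib smult_monom)
  finally show ?thesis by (simp add: sum.distrib Nop_def)
qed

lemma S6: "D gen_y gen_x = 0"
proof -
  have p11: "phi (mnm (Suc 0) (Suc 0)) = amult h u gen_y + amult h gen_x v + c gen_x gen_y"
  proof -
    have g: "mnm (Suc 0) 0 = gen_x" by (simp add: gen_x_mnm)
    show ?thesis by (simp add: phi_mnm phi0_1' g)
  qed
  have "D gen_y gen_x = - (Ob h c + d1 h u v)"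
    by (simp add: D_expl gen_yx xy_mnm flinear_add[OF phi_lin] p11 phi_h phi_x phi_y Ob_def d1_def algebra_simps)
  then show ?thesis using rel by simp
qed

lemma DL_sum: "D (\<Sum>i\<in>S. f i) b = (\<Sum>i\<in>S. D (f i) b)"
  using flinear_sum[OF DL] .
lemma DR_sum: "D a (\<Sum>i\<in>S. f i) = (\<Sum>i\<in>S. D a (f i))"
  using flinear_sum[OF DR] .

lemma D_const_x: "D [:r:] gen_x = 0"
  by (subst const_as_xp) (simp add: DL_sum flinear_ascal[OF DL] S5 ascal_0)

lemma S7aux: assumes "\<forall>a'. degree a' \<le> j \<longrightarrow> D a' gen_x = 0" "degree b \<le> j"
  shows "D b (xp n) = 0"
proof (induction n)
  case 0 then show ?case by (simp add: xp_0 S2)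
next
  case (Suc n)
  have "degree (amult h b (xp n)) \<le> j"
    using degree_amult[of h b "xp n"] assms(2) by (simp add: xp_def)
  then have 1: "D (amult h b (xp n)) gen_x = 0" using assms(1) by blast
  have 2: "amult h (xp n) gen_x = xp (Suc n)" by (simp add: amult_xp_xp flip: xp_1)
  show ?case using DI[of b "xp n" gen_x] 1 2 Suc by (simp add: S5)
qed

lemma S7aux2: assumes "\<forall>a'. degree a' \<le> j \<longrightarrow> D a' gen_x = 0" "degree b \<le> j"
  shows "D b [:r:] = 0"
  by (subst const_as_xp) (simp add: DR_sum flinear_ascal[OF DR] S7aux[OF assms] ascal_0)

lemma pCons_split: "pCons c0 b = [:c0:] + amult h b gen_y"
  by (simp add: amult_gen_y_right)

lemma S7: "D a gen_x = 0"
proof -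
  have "\<forall>a. degree a \<le> j \<longrightarrow> D a gen_x = 0" for j
  proof (induction j)
    case 0
    show ?case
    proof (intro allI impI)
      fix a :: "'a poly poly" assume "degree a \<le> 0"
      then have "a = [:coeff a 0:]" by (metis degree_0_id le_zero_eq)
      then show "D a gen_x = 0" using D_const_x by metis
    qed
  next
    case (Suc j)
    show ?case
    proof (intro allI impI)
      fix a :: "'a poly poly" assume deg: "degree a \<le> Suc j"
      obtain c0 b where ab: "a = pCons c0 b" by (rule pCons_cases)
      have db: "degree b \<le> j" using deg ab by (cases "b = 0") auto
      have "D (amult h b gen_y) gen_x = D b (amult h gen_y gen_x)"
        using DI[of b gen_y gen_x] by (simp add: S6 S1)
      also have "\<dots> = 0"
        using Suc db by (simp add: gen_yx flinear_add[OF DR] S3 S7aux2)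
      finally have "D (amult h b gen_y) gen_x = 0" .
      then show "D a gen_x = 0"
        by (simp add: ab pCons_split[of c0 b] flinear_add[OF DL] D_const_x)
    qed
  qed
  then show ?thesis by blast
qed

lemma S8: "D a b = 0"
proof (induction b rule: pCons_induct)
  case (pCons c0 b)
  have "\<forall>a'. degree a' \<le> degree a \<longrightarrow> D a' gen_x = 0" using S7 by blast
  then have "D a [:c0:] = 0" by (rule S7aux2) simp
  then show ?case using pCons.IH by (simp add: pCons_split[of c0 b] flinear_add[OF DR] S3)
qed (simp add: flinear_0[OF DR])

theorem coboundary: "hoch_coboundary2 h c"
proof -
  have "c = cob h (\<lambda>z. - phi z)"
  proof (intro ext)
    fix a b show "c a b = cob h (\<lambda>z. - phi z) a b" using S8[of a b] by (simp add: D_def)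
  qed
  then show ?thesis unfolding coboundary_iff using flinear_minus_fun[OF phi_lin] by blast
qed

end


section \<open>Construction of cocycles with prescribed obstruction\<close>

definition LX :: "'a::field poly \<Rightarrow> 'a poly poly \<Rightarrow> nat \<Rightarrow> 'a poly poly" where
  "LX h w k = (\<Sum>i<k. smult (monom 1 i) (amult h w (xp (k - 1 - i))))"

definition Lw :: "'a::field poly \<Rightarrow> 'a poly poly \<Rightarrow> 'a poly \<Rightarrow> 'a poly poly" where
  "Lw h w p = lin1 (LX h w) p"

lemma LX_0[simp]: "LX h w 0 = 0" by (simp add: LX_def)
lemma LX_Suc: "LX h w (Suc k) = amult h w (xp k) + smult [:0, 1:] (LX h w k)"
proof -
  have "LX h w (Suc k) = smult (monom 1 0) (amult h w (xp (Suc k - 1 - 0))) +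
      (\<Sum>i<k. smult (monom 1 (Suc i)) (amult h w (xp (Suc k - 1 - Suc i))))"
    unfolding LX_def by (rule sum.lessThan_Suc_shift)
  also have "(\<Sum>i<k. smult (monom 1 (Suc i)) (amult h w (xp (Suc k - 1 - Suc i)))) = smult [:0, 1:] (LX h w k)"
    unfolding LX_def smult_sum_right
    by (rule sum.cong) (simp_all add: smult_smult monom_Suc)
  finally show ?thesis by simp
qed

lemma lin1_G_add: "lin1 (\<lambda>k. F k + G k) p = lin1 F p + lin1 G p"
  by (simp add: lin1_def smult_add_right sum.distrib)
lemma lin1_G_smult: "lin1 (\<lambda>k. smult q (G k)) p = smult q (lin1 G p)"
  by (simp add: lin1_def smult_sum_right smult_smult mult.commute)
lemma lin1_pCons0: "lin1 G (pCons 0 p) = lin1 (\<lambda>k. G (Suc k)) p"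
proof -
  have "lin1 G (pCons 0 p) = (\<Sum>j\<le>Suc (degree p). smult [:coeff (pCons 0 p) j:] (G j))"
    by (rule lin1_bound) (simp add: degree_pCons_le)
  also have "\<dots> = (\<Sum>j\<le>degree p. smult [:coeff p j:] (G (Suc j)))"
    by (subst sum.atMost_Suc_shift) simp
  finally show ?thesis by (simp add: lin1_def)
qed
lemma lin1_amult_xp: "lin1 (\<lambda>k. amult h w (xp k)) q = amult h w [:q:]"
  by (subst const_as_xp) (simp only: lin1_def amult_sum_right amult_smult_const_right ascal_def)

lemma Lw_add: "Lw h w (p + q) = Lw h w p + Lw h w q" by (simp add: Lw_def lin1_add)
lemma Lw_0[simp]: "Lw h w 0 = 0" by (simp add: Lw_def)
lemma Lw_smult: "Lw h w (smult k p) = ascal k (Lw h w p)" by (simp add: Lw_def lin1_smult ascal_def)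
lemma Lw_const: "Lw h w [:k:] = 0"
  using lin1_monom[of "LX h w" k 0] by (simp add: Lw_def monom_0)
lemma Lw_diff: "Lw h w (p - q) = Lw h w p - Lw h w q"
  using Lw_add[of h w "p - q" q] by simp
lemma Lw_X: "Lw h w [:0, 1:] = w"
proof -
  have "Lw h w (monom 1 1) = LX h w 1" by (simp add: Lw_def lin1_monom)
  also have "\<dots> = w" using LX_Suc[of h w 0] by (simp add: xp_0)
  finally show ?thesis by (simp add: X_monom)
qed

lemma Lw_xmult: "Lw h w (pCons 0 q) = amult h w [:q:] + smult [:0, 1:] (Lw h w q)"
  by (simp add: Lw_def lin1_pCons0 LX_Suc lin1_G_add lin1_G_smult lin1_amult_xp)

lemma Lw_leibniz: "Lw h w (p * q) = amult h (Lw h w p) [:q:] + smult p (Lw h w q)"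
proof (induction p rule: pCons_induct)
  case (pCons a p)
  have e1: "pCons a p * q = smult a q + pCons 0 (p * q)" by simp
  have e2: "pCons a p = [:a:] + pCons 0 p" by simp
  have e3: "amult h (amult h w [:p:]) [:q:] = amult h w [:p * q:]"
    by (simp only: amult_assoc[symmetric] amult_const_left smult_pCons smult_0_right mult.commute)
  have e4: "smult (pCons a p) z = smult [:a:] z + smult [:0, 1:] (smult p z)" for z :: "'a poly poly"
  proof -
    have "pCons a p = [:a:] + [:0, 1:] * p" by simp
    then show ?thesis by (simp only: smult_add_left smult_smult)
  qed
  have "Lw h w (pCons a p * q) = smult [:a:] (Lw h w q) + amult h w [:p * q:] +
      smult [:0, 1:] (amult h (Lw h w p) [:q:] + smult p (Lw h w q))"
    by (simp only: e1 Lw_add Lw_smult Lw_xmult pCons.IH ascal_def add.assoc)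
  also have "\<dots> = (amult h w [:p * q:] + smult [:0, 1:] (amult h (Lw h w p) [:q:])) +
      (smult [:a:] (Lw h w q) + smult [:0, 1:] (smult p (Lw h w q)))"
    by (simp only: smult_add_right add_ac)
  also have "\<dots> = amult h (Lw h w (pCons a p)) [:q:] + smult (pCons a p) (Lw h w q)"
    unfolding e4 by (simp only: e2 e3 Lw_add Lw_const Lw_xmult amult_add_left amult_smult_left add_0_left)
  finally show ?case .
qed simp


definition Tw :: "'a::field poly \<Rightarrow> 'a poly poly \<Rightarrow> 'a poly poly \<Rightarrow> 'a poly poly" where
  "Tw h w z = (\<Sum>m\<le>degree z. amult h (Lw h w (coeff z m)) (monom 1 m))"

lemma Tw_bound: assumes "degree z \<le> N" shows "Tw h w z = (\<Sum>m\<le>N. amult h (Lw h w (coeff z m)) (monom 1 m))"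
  unfolding Tw_def
  by (rule sum.mono_neutral_left) (use assms in \<open>auto simp: coeff_eq_0\<close>)
lemma Tw_add: "Tw h w (a + b) = Tw h w a + Tw h w b"
proof -
  define N where "N = max (degree a) (degree b)"
  have "degree (a + b) \<le> N" "degree a \<le> N" "degree b \<le> N"
    using degree_add_le_max[of a b] by (auto simp: N_def)
  then show ?thesis by (simp add: Tw_bound[of _ N] sum.distrib Lw_add amult_add_left)
qed
lemma Tw_0[simp]: "Tw h w 0 = 0" by (simp add: Tw_def)
lemma Tw_diff: "Tw h w (a - b) = Tw h w a - Tw h w b"
  using Tw_add[of h w "a - b" b] by simp
lemma Tw_smult: "Tw h w (smult p z) = amult h (Lw h w p) z + smult p (Tw h w z)"
proof -
  have "Tw h w (smult p z) = (\<Sum>m\<le>degree z. amult h (Lw h w (p * coeff z m)) (monom 1 m))"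
    by (subst Tw_bound[of _ "degree z"]) (simp_all add: degree_smult_le)
  also have "\<dots> = (\<Sum>m\<le>degree z. amult h (Lw h w p) (monom (coeff z m) m) + smult p (amult h (Lw h w (coeff z m)) (monom 1 m)))"
  proof (rule sum.cong)
    fix m
    have "amult h [:coeff z m:] (monom 1 m) = monom (coeff z m) m"
      by (simp add: amult_const_left smult_monom)
    then show "amult h (Lw h w (p * coeff z m)) (monom 1 m) = amult h (Lw h w p) (monom (coeff z m) m) + smult p (amult h (Lw h w (coeff z m)) (monom 1 m))"
      by (simp add: Lw_leibniz amult_add_left amult_smult_left flip: amult_assoc)
  qed simp
  also have "\<dots> = amult h (Lw h w p) z + smult p (Tw h w z)"
    by (simp add: sum.distrib Tw_def smult_sum_right poly_as_sum_of_monoms flip: amult_sum_right)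
  finally show ?thesis .
qed
lemma Tw_smult_const: "Tw h w (smult [:k:] z) = smult [:k:] (Tw h w z)"
  by (simp add: Tw_smult Lw_const)
lemma Tw_monom: "Tw h w (monom p m) = amult h (Lw h w p) (monom 1 m)"
proof -
  have "Tw h w (monom p m) = (\<Sum>i\<le>m. amult h (Lw h w (coeff (monom p m) i)) (monom 1 i))"
    by (rule Tw_bound) (simp add: degree_monom_le)
  also have "\<dots> = amult h (Lw h w p) (monom 1 m)"
    by (subst sum.remove[of _ m]) (auto simp: coeff_monom)
  finally show ?thesis .
qed
lemma Tw_X: "Tw h w gen_x = w"
  using Tw_monom[of h w "[:0,1:]" 0] unfolding Lw_X by (simp add: gen_x_def monom_0 pCons_one)
lemma Tw_sum: "Tw h w (\<Sum>i\<in>S. f i) = (\<Sum>i\<in>S. Tw h w (f i))"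
  by (induction S rule: infinite_finite_induct) (auto simp: Tw_add)

definition Cw :: "'a::field poly \<Rightarrow> 'a poly poly \<Rightarrow> nat \<Rightarrow> 'a poly poly \<Rightarrow> 'a poly poly" where
  "Cw h w j b = (\<Sum>i<j. (Ly h ^^ (j - 1 - i)) (Tw h w ((Ly h ^^ i) b)))"

lemma Cw_0[simp]: "Cw h w 0 b = 0" by (simp add: Cw_def)
lemma Cw_Suc: "Cw h w (Suc j) b = Ly h (Cw h w j b) + Tw h w ((Ly h ^^ j) b)"
proof -
  have "Cw h w (Suc j) b = (\<Sum>i<j. (Ly h ^^ (j - i)) (Tw h w ((Ly h ^^ i) b))) + Tw h w ((Ly h ^^ j) b)"
    unfolding Cw_def by (simp only: sum.lessThan_Suc diff_Suc_1 diff_self_eq_0 funpow_0)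
  also have "(\<Sum>i<j. (Ly h ^^ (j - i)) (Tw h w ((Ly h ^^ i) b))) = Ly h (Cw h w j b)"
    unfolding Cw_def Ly_sum
  proof (rule sum.cong)
    fix i assume "i \<in> {..<j}"
    then have "j - i = Suc (j - 1 - i)" by auto
    then show "(Ly h ^^ (j - i)) (Tw h w ((Ly h ^^ i) b)) = Ly h ((Ly h ^^ (j - 1 - i)) (Tw h w ((Ly h ^^ i) b)))"
      by simp
  qed simp
  finally show ?thesis .
qed
lemma Cw_add: "Cw h w j (a + b) = Cw h w j a + Cw h w j b"
  by (simp add: Cw_def Lyp_add Tw_add sum.distrib)
lemma Cw_smult_const: "Cw h w j (smult [:k:] b) = smult [:k:] (Cw h w j b)"
  by (simp add: Cw_def Lyp_smult_const Tw_smult_const smult_sum_right)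

definition cw :: "'a::field poly \<Rightarrow> 'a poly poly \<Rightarrow> 'a poly poly \<Rightarrow> 'a poly poly \<Rightarrow> 'a poly poly" where
  "cw h w a b = lm (\<lambda>j. Cw h w j b) a"

lemma cw_add_left: "cw h w (a1 + a2) b = cw h w a1 b + cw h w a2 b" by (simp add: cw_def lm_add)
lemma cw_add_right: "cw h w a (b1 + b2) = cw h w a b1 + cw h w a b2" by (simp add: cw_def Cw_add lm_G_add)
lemma cw_smult_left: "cw h w (smult p a) b = smult p (cw h w a b)" by (simp add: cw_def lm_smult)
lemma cw_0_left[simp]: "cw h w 0 b = 0" by (simp add: cw_def)
lemma cw_monom: "cw h w (monom p k) b = smult p (Cw h w k b)" by (simp add: cw_def lm_monom)
lemma cw_smult_const_right: "cw h w a (smult [:k:] b) = smult [:k:] (cw h w a b)"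
  by (simp add: cw_def Cw_smult_const lm_smult_const_G)
lemma cw_bil: "fbilinear (cw h w)"
  unfolding fbilinear_def flinear_def ascal_def
  by (simp add: cw_add_left cw_add_right cw_smult_left cw_smult_const_right)
lemma cw_1[simp]: "cw h w 1 b = 0"
  using cw_monom[of h w 1 0 b] by (simp add: monom_0 pCons_one)
lemma cw_y: "cw h w gen_y b = Tw h w b"
  by (simp add: gen_y_monom cw_monom Cw_Suc[of h w 0, simplified])
lemma cw_x: "cw h w gen_x b = 0"
  by (simp add: gen_x_def cw_def lm_const)

lemma Ob_cw: "Ob h (cw h w) = w"
  by (simp add: Ob_def cw_y cw_x Tw_X)


definition Zc :: "'a::field poly \<Rightarrow> ('a poly poly \<Rightarrow> 'a poly poly \<Rightarrow> 'a poly poly) \<Rightarrow> 'a poly poly \<Rightarrow> 'a poly poly \<Rightarrow> 'a poly poly \<Rightarrow> 'a poly poly" where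
  "Zc h c a b e = amult h a (c b e) - c (amult h a b) e + c a (amult h b e) - amult h (c a b) e"

lemma Zc_dd: "amult h a (Zc h c a' b e) - Zc h c (amult h a a') b e + Zc h c a (amult h a' b) e
   - Zc h c a a' (amult h b e) + amult h (Zc h c a a' b) e = 0"
  by (simp add: Zc_def amult_diff_left amult_diff_right amult_add_left amult_add_right amult_assoc)

lemma cocid_Zc: "cocid h c \<longleftrightarrow> (\<forall>a b e. Zc h c a b e = 0)"
  by (simp add: cocid_def Zc_def)

lemma Zcw_add_left: "Zc h (cw h w) (a1 + a2) b e = Zc h (cw h w) a1 b e + Zc h (cw h w) a2 b e"
  by (simp add: Zc_def amult_add_left amult_add_right cw_add_left cw_add_right)
lemma Zcw_add_mid: "Zc h (cw h w) a (b1 + b2) e = Zc h (cw h w) a b1 e + Zc h (cw h w) a b2 e"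
  by (simp add: Zc_def amult_add_left amult_add_right cw_add_left cw_add_right)
lemma Zcw_0_left: "Zc h (cw h w) 0 b e = 0" by (simp add: Zc_def)
lemma Cw_zero[simp]: "Cw h w j 0 = 0" by (simp add: Cw_def)
lemma Zcw_0_mid: "Zc h (cw h w) a 0 e = 0" by (simp add: Zc_def cw_def)
lemma Zcw_sum_left: "Zc h (cw h w) (\<Sum>i\<in>S. f i) b e = (\<Sum>i\<in>S. Zc h (cw h w) (f i) b e)"
  by (induction S rule: infinite_finite_induct) (auto simp: Zcw_add_left Zcw_0_left)
lemma Zcw_sum_mid: "Zc h (cw h w) a (\<Sum>i\<in>S. f i) e = (\<Sum>i\<in>S. Zc h (cw h w) a (f i) e)"
  by (induction S rule: infinite_finite_induct) (auto simp: Zcw_add_mid Zcw_0_mid)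
lemma Zcw_smult: "Zc h (cw h w) (smult p a) b e = smult p (Zc h (cw h w) a b e)"
  by (simp add: Zc_def amult_smult_left cw_smult_left smult_diff_right smult_add_right)

lemma Zcw_y_monom: "Zc h (cw h w) gen_y (monom p k) e = 0"
proof -
  have 1: "amult h gen_y (cw h w (monom p k) e) = smult p (Ly h (Cw h w k e)) + smult (hder h p) (Cw h w k e)"
    by (simp add: amult_gen_y_left cw_monom Ly_smult)
  have 2: "cw h w (amult h gen_y (monom p k)) e = smult p (Ly h (Cw h w k e)) + smult p (Tw h w ((Ly h ^^ k) e)) + smult (hder h p) (Cw h w k e)"
    by (simp add: amult_gen_y_left Ly_monom cw_add_left cw_monom Cw_Suc smult_add_right)
  have 3: "cw h w gen_y (amult h (monom p k) e) = amult h (Lw h w p) ((Ly h ^^ k) e) + smult p (Tw h w ((Ly h ^^ k) e))"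
    by (simp add: cw_y amult_monom_left Tw_smult)
  have 4: "amult h (cw h w gen_y (monom p k)) e = amult h (Lw h w p) ((Ly h ^^ k) e)"
    by (simp add: cw_y Tw_monom amult_monom_left flip: amult_assoc)
  show ?thesis unfolding Zc_def 1 2 3 4 by simp
qed

lemma Zcw_y: "Zc h (cw h w) gen_y b e = 0"
proof -
  have "Zc h (cw h w) gen_y b e = Zc h (cw h w) gen_y (\<Sum>k\<le>degree b. monom (coeff b k) k) e"
    by (simp only: poly_as_sum_of_monoms)
  also have "\<dots> = 0" by (simp add: Zcw_sum_mid Zcw_y_monom)
  finally show ?thesis .
qed

lemma Zcw_ypow: "Zc h (cw h w) (monom 1 j) b e = 0"
proof (induction j arbitrary: b e)
  case 0
  then show ?case by (simp add: Zc_def monom_0 pCons_one)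
next
  case (Suc j)
  have "monom 1 (Suc j) = amult h (monom 1 j) gen_y" by (simp add: amult_gen_y_right monom_Suc)
  then show ?case using Zc_dd[of h "monom 1 j" "cw h w" gen_y b e] by (simp add: Suc Zcw_y)
qed

lemma cw_cocycle: "hoch_cocycle2 h (cw h w)"
proof -
  have "Zc h (cw h w) a b e = 0" for a b e
  proof -
    have "Zc h (cw h w) a b e = Zc h (cw h w) (\<Sum>j\<le>degree a. smult (coeff a j) (monom 1 j)) b e"
      by (simp only: smult_monom mult_1_right poly_as_sum_of_monoms)
    also have "\<dots> = 0" by (simp add: Zcw_sum_left Zcw_smult Zcw_ypow)
    finally show ?thesis .
  qed
  then show ?thesis by (simp add: cocycle_iff cocid_Zc cw_bil)
qed


lemma smult_sum_left': "smult (\<Sum>i\<in>S. f i) p = (\<Sum>i\<in>S. smult (f i) p)"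
  by (rule poly_eqI) (simp add: coeff_sum sum_distrib_right)

lemma Ob_add: "Ob h (\<lambda>a b. c1 a b + c2 a b) = Ob h c1 + Ob h c2"
  by (simp add: Ob_def smult_add_right sum.distrib algebra_simps)
lemma Ob_diff: "Ob h (\<lambda>a b. c1 a b - c2 a b) = Ob h c1 - Ob h c2"
  by (simp add: Ob_def smult_diff_right sum_subtractf algebra_simps)
lemma Ob_ascal: "Ob h (\<lambda>a b. ascal k (c a b)) = ascal k (Ob h c)"
  by (simp add: Ob_def ascal_def smult_diff_right smult_sum_right smult_smult mult.commute)
lemma Ob_zero: "Ob h (\<lambda>a b. 0) = 0"
  by (simp add: Ob_def)
lemma Ob_sum: "Ob h (\<lambda>a b. \<Sum>i\<in>S. cs i a b) = (\<Sum>i\<in>S. Ob h (cs i))"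
proof (induction S rule: infinite_finite_induct)
  case (insert x F)
  then show ?case using Ob_add[of h "cs x" "\<lambda>a b. \<Sum>i\<in>F. cs i a b"] by simp
qed (simp_all add: Ob_zero)

lemma Ob_cob_tele: assumes f: "flinear f"
  shows "(\<Sum>i<n. smult (monom a (n - 1 - i)) (cob h f gen_x (xp i))) =
    smult (monom a n) (f 1) - ascal a (f (xp n)) + (\<Sum>i<n. smult (monom a (n - 1 - i)) (amult h (f gen_x) (xp i)))"
proof -
  define g where "g i = smult (monom a (n - i)) (f (xp i))" for i
  have "(\<Sum>i<n. smult (monom a (n - 1 - i)) (cob h f gen_x (xp i))) =
     (\<Sum>i<n. g i - g (Suc i)) + (\<Sum>i<n. smult (monom a (n - 1 - i)) (amult h (f gen_x) (xp i)))"
    unfolding sum.distrib[symmetric]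
  proof (rule sum.cong)
    fix i assume "i \<in> {..<n}"
    then have ni: "n - i = (n - 1 - i) + 1" by auto
    have "monom a (n - 1 - i) * [:0, 1:] = monom a (n - i)"
      by (simp only: X_monom mult_monom mult_1_right ni)
    then have "smult (monom a (n - 1 - i)) (smult [:0, 1:] (f (xp i))) = g i"
      by (simp add: g_def smult_smult)
    then show "smult (monom a (n - 1 - i)) (cob h f gen_x (xp i)) =
       g i - g (Suc i) + smult (monom a (n - 1 - i)) (amult h (f gen_x) (xp i))"
      unfolding cob_def amult_gen_x_xp by (simp add: amult_gen_x_left g_def smult_add_right smult_diff_right)
  qed simp
  also have "(\<Sum>i<n. g i - g (Suc i)) = g 0 - g n" by (rule sum_lessThan_telescope')
  also have "g 0 - g n = smult (monom a n) (f 1) - ascal a (f (xp n))"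
    by (simp add: g_def xp_0 ascal_def monom_0)
  finally show ?thesis .
qed

lemma Ob_cob: assumes f: "flinear f"
  shows "Ob h (cob h f) = d1 h (f gen_x) (f gen_y) - smult h (f 1)"
proof -
  have fh: "f [:h:] = (\<Sum>n\<le>degree h. ascal (coeff h n) (f (xp n)))"
    by (subst const_as_xp) (simp add: flinear_sum[OF f] flinear_ascal[OF f])
  have sh: "smult h (f 1) = (\<Sum>n\<le>degree h. smult (monom (coeff h n) n) (f 1))"
    by (subst (1) poly_as_sum_of_monoms[symmetric]) (simp only: smult_sum_left')
  have 1: "(\<Sum>n\<le>degree h. \<Sum>i<n. smult (monom (coeff h n) (n - 1 - i)) (cob h f gen_x (xp i)))
     = smult h (f 1) - f [:h:] + Nop h (f gen_x)"
    by (simp only: Ob_cob_tele[OF f] sum.distrib sum_subtractf Nop_def flip: fh sh)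
  have 2: "cob h f gen_y gen_x - cob h f gen_x gen_y =
      amult h gen_y (f gen_x) - amult h (f gen_x) gen_y + amult h (f gen_y) gen_x - amult h gen_x (f gen_y) - f [:h:]"
    by (simp add: cob_def gen_yx flinear_add[OF f])
  show ?thesis unfolding Ob_def 1 2 d1_def by (simp add: algebra_simps)
qed


section \<open>Reduction modulo g\<close>

lemma const_mult_eq_smult: "[:c:] * u = smult c u" by simp

lemma in_ideal_iff: "in_ideal h g a \<longleftrightarrow> [:g:] dvd a"
  by (simp add: in_ideal_def amult_const_left dvd_def)

lemma dvd_smultI: "[:g:] dvd z \<Longrightarrow> [:g:] dvd smult p z"
  using dvd_mult[of "[:g:]" z "[:p:]"] by (simp only: const_mult_eq_smult)

lemma map_hder_dvd: "g dvd h \<Longrightarrow> [:g:] dvd map_poly (hder h) z"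
  unfolding const_poly_dvd_iff by (auto simp: coeff_map_poly hder_def intro: dvd_mult2)

lemma Ly_mod: "g dvd h \<Longrightarrow> [:g:] dvd (Ly h z - pCons 0 z)"
proof -
  have "Ly h z - pCons 0 z = map_poly (hder h) z" by (simp add: Ly_def)
  then show "g dvd h \<Longrightarrow> [:g:] dvd (Ly h z - pCons 0 z)" by (simp add: map_hder_dvd)
qed

lemma pCons0_mult: "pCons 0 z = [:0, 1:] * (z :: 'b::comm_semiring_1 poly)" by simp

lemma Ly_dvd: "g dvd h \<Longrightarrow> [:g:] dvd z \<Longrightarrow> [:g:] dvd Ly h z"
proof -
  have "Ly h z = [:0, 1:] * z + map_poly (hder h) z" by (simp add: Ly_def)
  then show "g dvd h \<Longrightarrow> [:g:] dvd z \<Longrightarrow> [:g:] dvd Ly h z"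
    by (simp only:) (intro dvd_add dvd_mult map_hder_dvd)
qed

lemma Lyp_mod: assumes "g dvd h" shows "[:g:] dvd ((Ly h ^^ j) z - monom 1 j * z)"
proof (induction j)
  case 0 then show ?case by (simp only: funpow_0 monom_0 pCons_one mult_1 diff_self dvd_0_right)
next
  case (Suc j)
  have e: "monom 1 (Suc j) * z = pCons 0 (monom 1 j * z)" by (simp add: monom_Suc)
  have "(Ly h ^^ Suc j) z - monom 1 (Suc j) * z =
     Ly h ((Ly h ^^ j) z - monom 1 j * z) + (Ly h (monom 1 j * z) - pCons 0 (monom 1 j * z))"
    unfolding e by (simp add: Ly_diff)
  then show ?case using Suc assms by (simp add: Ly_dvd Ly_mod)
qed

lemma mult_as_lm: "a * b = lm (\<lambda>j. monom 1 j * b) a"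
proof -
  have "a * b = (\<Sum>j\<le>degree a. monom (coeff a j) j) * b" by (simp add: poly_as_sum_of_monoms)
  also have "\<dots> = lm (\<lambda>j. monom 1 j * b) a"
    by (simp add: lm_def sum_distrib_right smult_monom flip: mult_smult_left)
  finally show ?thesis .
qed

lemma amult_mod: assumes "g dvd h" shows "[:g:] dvd (amult h a b - a * b)"
proof -
  have "amult h a b - a * b = lm (\<lambda>j. (Ly h ^^ j) b - monom 1 j * b) a"
    by (subst mult_as_lm) (simp only: amult_lm lm_G_diff)
  also have "[:g:] dvd \<dots>"
    unfolding lm_def by (intro dvd_sum dvd_smultI Lyp_mod assms)
  finally show ?thesis .
qed

lemma pderiv_sum': "pderiv (\<Sum>i\<in>S. f i) = (\<Sum>i\<in>S. pderiv (f i))"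
  by (induction S rule: infinite_finite_induct) (auto simp: pderiv_add)

lemma pderiv_dsum: "(\<Sum>n\<le>degree h. \<Sum>i<n. monom (coeff h n) (n - 1 - i) * monom 1 i) = pderiv h"
proof -
  have "(\<Sum>n\<le>degree h. \<Sum>i<n. monom (coeff h n) (n - 1 - i) * monom 1 i) =
        (\<Sum>n\<le>degree h. monom (of_nat n * coeff h n) (n - 1))"
  proof (rule sum.cong)
    fix n
    have "(\<Sum>i<n. monom (coeff h n) (n - 1 - i) * monom 1 i) = (\<Sum>i<n. monom (coeff h n) (n - 1))"
      by (rule sum.cong) (simp_all add: mult_monom)
    also have "\<dots> = monom (of_nat n * coeff h n) (n - 1)"
      by (simp only: monom_sum[symmetric] sum_constant card_lessThan)
    finally show "(\<Sum>i<n. monom (coeff h n) (n - 1 - i) * monom 1 i) = monom (of_nat n * coeff h n) (n - 1)" .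
  qed simp
  also have "\<dots> = pderiv h"
    by (subst (2) poly_as_sum_of_monoms[symmetric]) (simp add: pderiv_sum' pderiv_monom)
  finally show ?thesis .
qed

lemma Nop_mod: assumes "g dvd h" shows "[:g:] dvd (Nop h u - smult (pderiv h) u)"
proof -
  have t: "u * xp i = smult (monom 1 i) u" for i
    by (simp only: xp_def mult.commute[of u] const_mult_eq_smult)
  have "smult (pderiv h) u = (\<Sum>n\<le>degree h. \<Sum>i<n. smult (monom (coeff h n) (n - 1 - i) * monom 1 i) u)"
    by (simp only: pderiv_dsum[symmetric] smult_sum_left')
  also have "\<dots> = (\<Sum>n\<le>degree h. \<Sum>i<n. smult (monom (coeff h n) (n - 1 - i)) (u * xp i))"
    by (simp only: t smult_smult)
  finally have "smult (pderiv h) u = (\<Sum>n\<le>degree h. \<Sum>i<n. smult (monom (coeff h n) (n - 1 - i)) (u * xp i))" .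
  then have "Nop h u - smult (pderiv h) u =
     (\<Sum>n\<le>degree h. \<Sum>i<n. smult (monom (coeff h n) (n - 1 - i)) (amult h u (xp i) - u * xp i))"
    by (simp add: Nop_def smult_diff_right sum_subtractf)
  also have "[:g:] dvd \<dots>"
    by (intro dvd_sum dvd_smultI amult_mod assms)
  finally show ?thesis .
qed

lemma dvd_smult_constI: "g dvd p \<Longrightarrow> [:g:] dvd smult p (u :: 'a::field poly poly)"
proof -
  assume "g dvd p"
  then have "[:g:] dvd [:p:]" by (metis const_poly_dvd_const_poly_iff)
  then have "[:g:] dvd [:p:] * u" by (rule dvd_mult2)
  then show ?thesis by (simp only: const_mult_eq_smult)
qed

lemma d1_mod: assumes "g dvd h" "g dvd pderiv h" shows "[:g:] dvd d1 h u v"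
proof -
  have "d1 h u v = (amult h gen_y u - gen_y * u) - (amult h u gen_y - u * gen_y) + (amult h v gen_x - v * gen_x)
      - (amult h gen_x v - gen_x * v) - (Nop h u - smult (pderiv h) u) - smult (pderiv h) u"
    by (simp add: d1_def algebra_simps mult.commute[of u gen_y] mult.commute[of v gen_x])
  also have "[:g:] dvd \<dots>"
    using assms by (intro dvd_add dvd_diff amult_mod Nop_mod dvd_smult_constI)
  finally show ?thesis .
qed


section \<open>The image of d1\<close>

lemma degree_Lyp_const: "degree ((Ly h ^^ j) [:r:]) \<le> j"
  using degree_Lyp[where h=h and j=j and z="[:r:]"] by simp

lemma coeff_Lyp_const: "coeff ((Ly h ^^ j) [:r:]) j = r"
proof (induction j)
  case (Suc j)
  have "coeff ((Ly h ^^ j) [:r:]) (Suc j) = 0"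
    using degree_Lyp_const[where h=h and j=j and r=r] by (simp add: coeff_eq_0)
  then show ?case using Suc by (simp add: coeff_Ly)
qed simp

lemma coeff_Lyp_const2: "coeff ((Ly h ^^ Suc j) [:r:]) j = of_nat (Suc j) * hder h r"
proof (induction j)
  case 0
  then show ?case by (simp add: coeff_Ly)
next
  case (Suc j)
  have "coeff ((Ly h ^^ Suc j) [:r:]) (Suc j) = r" by (rule coeff_Lyp_const)
  then show ?case using Suc by (simp add: coeff_Ly algebra_simps)
qed

lemma deg_le_pred: assumes "degree z \<le> Suc j" "coeff z (Suc j) = 0" shows "degree z \<le> j"
proof (rule degree_le, intro allI impI)
  fix i assume "j < i"
  then consider "i = Suc j" | "i > Suc j" by linarith
  then show "coeff z i = 0" using assms by cases (auto simp: coeff_eq_0)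
qed

lemma Nop_add: "Nop h (u1 + u2) = Nop h u1 + Nop h u2"
  by (simp add: Nop_def amult_add_left smult_add_right sum.distrib)
lemma Nop_0[simp]: "Nop h 0 = 0" by (simp add: Nop_def)
lemma d1_add: "d1 h (u1 + u2) (v1 + v2) = d1 h u1 v1 + d1 h u2 v2"
  by (simp add: d1_def Nop_add amult_add_left amult_add_right algebra_simps)
lemma d1_00: "d1 h 0 0 = 0" by (simp add: d1_def)

lemma d1_u: "degree (d1 h (monom p j) 0) \<le> j \<and> coeff (d1 h (monom p j) 0) j = h * pderiv p - pderiv h * p"
proof -
  have e: "d1 h (monom p j) 0 = monom (hder h p) j -
      (\<Sum>n\<le>degree h. \<Sum>i<n. smult (monom (coeff h n) (n - 1 - i)) (smult p ((Ly h ^^ j) (xp i))))"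
    by (simp add: d1_def Nop_def amult_gen_y_left amult_gen_y_right Ly_monom monom_Suc amult_monom_left)
  have d: "degree (\<Sum>n\<le>degree h. \<Sum>i<n. smult (monom (coeff h n) (n - 1 - i)) (smult p ((Ly h ^^ j) (xp i)))) \<le> j"
  proof (intro degree_sum_le)
    fix n i
    have "degree (smult (monom (coeff h n) (n - 1 - i)) (smult p ((Ly h ^^ j) (xp i)))) \<le> degree ((Ly h ^^ j) (xp i))"
      by (meson degree_smult_le order_trans)
    also have "\<dots> \<le> j" unfolding xp_def by (rule degree_Lyp_const)
    finally show "degree (smult (monom (coeff h n) (n - 1 - i)) (smult p ((Ly h ^^ j) (xp i)))) \<le> j" .
  qed auto
  have c: "coeff (\<Sum>n\<le>degree h. \<Sum>i<n. smult (monom (coeff h n) (n - 1 - i)) (smult p ((Ly h ^^ j) (xp i)))) j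
     = p * pderiv h"
  proof -
    have "coeff (\<Sum>n\<le>degree h. \<Sum>i<n. smult (monom (coeff h n) (n - 1 - i)) (smult p ((Ly h ^^ j) (xp i)))) j
      = (\<Sum>n\<le>degree h. \<Sum>i<n. monom (coeff h n) (n - 1 - i) * (p * monom 1 i))"
      by (simp only: coeff_sum coeff_smult xp_def coeff_Lyp_const)
    also have "\<dots> = p * (\<Sum>n\<le>degree h. \<Sum>i<n. monom (coeff h n) (n - 1 - i) * monom 1 i)"
      by (simp only: sum_distrib_left mult.left_commute)
    also have "\<dots> = p * pderiv h" by (simp only: pderiv_dsum)
    finally show ?thesis .
  qed
  show ?thesis
  proof
    show "degree (d1 h (monom p j) 0) \<le> j" unfolding e
      by (rule degree_diff_le[OF degree_monom_le d])
    show "coeff (d1 h (monom p j) 0) j = h * pderiv p - pderiv h * p"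
      unfolding e coeff_diff c by (simp add: hder_def mult.commute)
  qed
qed

lemma d1_v: "degree (d1 h 0 (monom q (Suc j))) \<le> j \<and> coeff (d1 h 0 (monom q (Suc j))) j = of_nat (Suc j) * h * q"
proof -
  define w where "w = (Ly h ^^ Suc j) [:[:0, 1:]:]"
  have e: "d1 h 0 (monom q (Suc j)) = smult q w - monom ([:0, 1:] * q) (Suc j)"
    by (simp add: d1_def w_def amult_monom_left gen_x_def amult_const_left smult_monom)
  have dw: "degree w \<le> Suc j" unfolding w_def by (rule degree_Lyp_const)
  have cw1: "coeff w (Suc j) = [:0, 1:]" unfolding w_def by (rule coeff_Lyp_const)
  have cw2: "coeff w j = of_nat (Suc j) * h" unfolding w_def by (simp only: coeff_Lyp_const2 hder_X)
  have "degree (smult q w - monom ([:0, 1:] * q) (Suc j)) \<le> Suc j"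
    using dw by (meson degree_diff_le degree_monom_le degree_smult_le order_trans)
  moreover have "coeff (smult q w - monom ([:0, 1:] * q) (Suc j)) (Suc j) = 0"
    by (simp add: cw1 mult.commute)
  ultimately have "degree (smult q w - monom ([:0, 1:] * q) (Suc j)) \<le> j" by (rule deg_le_pred)
  moreover have "coeff (smult q w - monom ([:0, 1:] * q) (Suc j)) j = of_nat (Suc j) * h * q"
    by (simp add: cw2 ac_simps)
  ultimately show ?thesis by (simp add: e)
qed

lemma d1_onto:
  fixes h g :: "'a::field_char_0 poly"
  assumes gh: "g dvd h" "g dvd pderiv h" and bez: "\<alpha> * h + \<beta> * pderiv h = g"
  shows "[:g:] dvd z \<Longrightarrow> \<exists>u v. z = d1 h u v"
proof (induction "degree z" arbitrary: z rule: less_induct)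
  case less
  show ?case
  proof (cases "z = 0")
    case True
    then show ?thesis using d1_00[of h] by metis
  next
    case False
    define j where "j = degree z"
    have "g dvd coeff z j" using less.prems by (simp add: const_poly_dvd_iff)
    then obtain s where t: "coeff z j = g * s" by (auto elim: dvdE)
    define p where "p = - (\<beta> * s)"
    define q where "q = smult (inverse (of_nat (Suc j))) (\<alpha> * s + pderiv (\<beta> * s))"
    define z1 where "z1 = d1 h (monom p j) (monom q (Suc j))"
    have z1eq: "z1 = d1 h (monom p j) 0 + d1 h 0 (monom q (Suc j))"
      using d1_add[of h "monom p j" 0 0 "monom q (Suc j)"] by (simp add: z1_def)
    have dz1: "degree z1 \<le> j" unfolding z1eq
      using d1_u[of h p j] d1_v[of h q j] by (meson degree_add_le)
    have qq: "of_nat (Suc j) * q = \<alpha> * s + pderiv (\<beta> * s)"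
    proof -
      have nz: "(of_nat (Suc j) :: 'a) \<noteq> 0" by (rule of_nat_neq_0)
      have "(of_nat (Suc j) :: 'a poly) = [:of_nat (Suc j):]" by (simp add: of_nat_poly)
      then have "of_nat (Suc j) * q = smult (of_nat (Suc j) * inverse (of_nat (Suc j))) (\<alpha> * s + pderiv (\<beta> * s))"
        by (simp only: q_def const_mult_eq_smult smult_smult)
      then show ?thesis using nz by simp
    qed
    have r1: "of_nat (Suc j) * h * q = h * (\<alpha> * s + pderiv (\<beta> * s))"
      using qq by (metis mult.assoc mult.commute)
    have "coeff z1 j = h * pderiv p - pderiv h * p + of_nat (Suc j) * h * q"
      unfolding z1eq using d1_u[of h p j] d1_v[of h q j] by simp
    also have "\<dots> = s * (\<alpha> * h + \<beta> * pderiv h)"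
      unfolding r1 by (simp add: p_def pderiv_minus algebra_simps)
    also have "\<dots> = coeff z j" by (simp add: bez t mult.commute)
    finally have cz1: "coeff z1 j = coeff z j" .
    define z' where "z' = z - z1"
    have gz': "[:g:] dvd z'" unfolding z'_def z1_def by (intro dvd_diff less.prems d1_mod gh)
    have dz': "degree z' \<le> j" unfolding z'_def using dz1 j_def
      by (metis degree_diff_le le_refl)
    have cz': "coeff z' j = 0" by (simp add: z'_def cz1)
    show ?thesis
    proof (cases "z' = 0")
      case True
      then show ?thesis unfolding z'_def z1_def by auto
    next
      case False
      then have "degree z' \<noteq> j" using cz' by (metis leading_coeff_0_iff)
      then have "degree z' < degree z" using dz' j_def by simp
      then obtain u' v' where "z' = d1 h u' v'" using less.hyps gz' by blast
      then have "z = d1 h (monom p j + u') (monom q (Suc j) + v')"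
        by (simp add: d1_add z'_def z1_def algebra_simps)
      then show ?thesis by blast
    qed
  qed
qed


lemma cob_dvd_Ob:
  assumes "hoch_coboundary2 h c" "g dvd h" "g dvd pderiv h"
  shows "[:g:] dvd Ob h c"
proof -
  obtain f where f: "flinear f" "c = cob h f" using assms(1) by (auto simp: coboundary_iff)
  show ?thesis unfolding f(2) Ob_cob[OF f(1)]
    using assms by (intro dvd_diff d1_mod dvd_smult_constI)
qed

lemma cocycle_unit:
  assumes "hoch_cocycle2 h c"
  shows "c 1 e = amult h (c 1 1) e" "c a 1 = amult h a (c 1 1)"
proof -
  have ci: "cocid h c" using assms by (simp add: cocycle_iff)
  show "c 1 e = amult h (c 1 1) e" using cocidD[OF ci, of 1 1 e] by simp
  show "c a 1 = amult h a (c 1 1)" using cocidD[OF ci, of a 1 1] by simp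
qed

lemma cob_add: "cob h (\<lambda>z. f1 z + f0 z) a b = cob h f1 a b + cob h f0 a b"
  by (simp add: cob_def amult_add_left amult_add_right algebra_simps)

lemma flinear_f0: "flinear (\<lambda>a. ascal (coeff (coeff a 0) 0) z)"
  unfolding flinear_def
proof (intro conjI allI)
  fix a b :: "'a poly poly"
  show "ascal (coeff (coeff (a + b) 0) 0) z = ascal (coeff (coeff a 0) 0) z + ascal (coeff (coeff b 0) 0) z"
    by (simp only: coeff_add ascal_def smult_const_add)
next
  fix k and a :: "'a poly poly"
  have "coeff (coeff (ascal k a) 0) 0 = k * coeff (coeff a 0) 0"
    by (simp only: ascal_def coeff_smult coeff_mult_0 coeff_pCons_0)
  then show "ascal (coeff (coeff (ascal k a) 0) 0) z = ascal k (ascal (coeff (coeff a 0) 0) z)"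
    by (simp only: ascal_def smult_const_mult)
qed

lemma Ob_ideal_iff:
  fixes h :: "'a::{field_char_0,field_gcd} poly"
  assumes coc: "hoch_cocycle2 h c"
  shows "[:gcd h (pderiv h):] dvd Ob h c \<longleftrightarrow> hoch_coboundary2 h c"
proof
  assume "hoch_coboundary2 h c"
  then show "[:gcd h (pderiv h):] dvd Ob h c" by (rule cob_dvd_Ob) simp_all
next
  define g where "g = gcd h (pderiv h)"
  have gh: "g dvd h" "g dvd pderiv h" by (simp_all add: g_def)
  have bez: "fst (bezout_coefficients h (pderiv h)) * h + snd (bezout_coefficients h (pderiv h)) * pderiv h = g"
    unfolding g_def by (rule bezout_coefficients_fst_snd)
  assume dv: "[:gcd h (pderiv h):] dvd Ob h c"
  define f0 where "f0 = (\<lambda>a. ascal (coeff (coeff a 0) 0) (c 1 1))"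
  have f0l: "flinear f0" unfolding f0_def by (rule flinear_f0)
  have f01: "f0 1 = c 1 1" by (simp add: f0_def ascal_def)
  define c' where "c' = (\<lambda>a b. c a b - cob h f0 a b)"
  have coc': "hoch_cocycle2 h c'"
    using coc unfolding cocycle_iff c'_def
    by (intro conjI fbilinear_diff fbilinear_cob f0l cocid_diff cocid_cob) auto
  have n1: "c' a 1 = 0" for a
  proof -
    have u: "c a 1 = amult h a (c 1 1)" by (rule cocycle_unit(2)[OF coc])
    show ?thesis unfolding c'_def cob_def f01 amult_1_right u by simp
  qed
  have n2: "c' 1 b = 0" for b
  proof -
    have u: "c 1 b = amult h (c 1 1) b" by (rule cocycle_unit(1)[OF coc])
    show ?thesis unfolding c'_def cob_def f01 amult_1_left u by simp
  qed
  have d0: "[:g:] dvd Ob h (cob h f0)"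
    using gh by (intro cob_dvd_Ob) (auto simp: coboundary_iff intro: f0l)
  have "[:g:] dvd Ob h c'"
    unfolding c'_def Ob_diff using dv d0 by (simp only: g_def dvd_diff)
  then have "[:g:] dvd - Ob h c'" by simp
  then obtain u v where uv: "- Ob h c' = d1 h u v" using d1_onto[OF gh bez] by blast
  have rel: "Ob h c' + d1 h u v = 0" using uv by (simp add: uv[symmetric])
  have "thmA h c' u v"
    using coc' n1 n2 rel by (unfold_locales) blast+
  then have "hoch_coboundary2 h c'" by (rule thmA.coboundary)
  then obtain f1 where f1: "flinear f1" "c' = cob h f1" by (auto simp: coboundary_iff)
  have "c = cob h (\<lambda>z. f1 z + f0 z)"
  proof (intro ext)
    fix a b
    have "c a b = c' a b + cob h f0 a b" by (simp add: c'_def)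
    then show "c a b = cob h (\<lambda>z. f1 z + f0 z) a b" by (simp add: cob_add f1(2))
  qed
  then show "hoch_coboundary2 h c" unfolding coboundary_iff
    using flinear_add_fun[OF f1(1) f0l] by blast
qed


lemma g_props:
  fixes h :: "'a::{field_char_0,field_gcd} poly"
  assumes "gcd h (pderiv h) \<noteq> 1"
  shows "\<not> gcd h (pderiv h) dvd 1"
  using assms by (metis normalize_gcd normalize_idem_imp_is_unit_iff)

lemma not_dvd_const:
  fixes h :: "'a::{field_char_0,field_gcd} poly"
  assumes "gcd h (pderiv h) \<noteq> 1" "gcd h (pderiv h) dvd [:k:]"
  shows "k = 0"
proof (rule ccontr)
  assume "k \<noteq> 0"
  then have "is_unit [:k:]" by (rule is_unit_triv)
  then have "gcd h (pderiv h) dvd 1" using assms(2) by (meson dvd_trans)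
  then show False using g_props[OF assms(1)] by blast
qed

theorem corollary3p4:
  fixes h :: "'a::{field_char_0,field_gcd} poly"
  assumes "h \<noteq> 0"
  defines "g \<equiv> gcd h (pderiv h)"
  shows
   "(\<exists>\<Phi> :: ('a poly poly \<Rightarrow> 'a poly poly \<Rightarrow> 'a poly poly) \<Rightarrow> 'a poly poly.
       (\<forall>c1 c2. hoch_cocycle2 h c1 \<longrightarrow> hoch_cocycle2 h c2 \<longrightarrow>
           \<Phi> (\<lambda>a b. c1 a b + c2 a b) = \<Phi> c1 + \<Phi> c2) \<and>
       (\<forall>k c. hoch_cocycle2 h c \<longrightarrow> \<Phi> (\<lambda>a b. ascal k (c a b)) = ascal k (\<Phi> c)) \<and>
       (\<forall>a. \<exists>c. hoch_cocycle2 h c \<and> in_ideal h g (\<Phi> c - a)) \<and>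
       (\<forall>c. hoch_cocycle2 h c \<longrightarrow> (in_ideal h g (\<Phi> c) \<longleftrightarrow> hoch_coboundary2 h c)))
    \<and> (\<exists>\<Psi> :: 'a poly poly \<Rightarrow> 'a poly poly.
       flinear \<Psi> \<and>
       (\<forall>a b. in_Dker g (\<Psi> (amult h a b) - \<Psi> a * \<Psi> b)) \<and>
       in_Dker g (\<Psi> aone - 1) \<and>
       (\<forall>p. \<exists>a. in_Dker g (\<Psi> a - p)) \<and>
       (\<forall>a. in_Dker g (\<Psi> a) \<longleftrightarrow> in_ideal h g a))
    \<and> (HH2_zero h \<longleftrightarrow> g = 1)
    \<and> (g \<noteq> 1 \<longrightarrow> HH2_infinite_dim h)"
proof (intro conjI)
  have gh: "g dvd h" "g dvd pderiv h" by (simp_all add: g_def)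
  show "\<exists>\<Phi> :: ('a poly poly \<Rightarrow> 'a poly poly \<Rightarrow> 'a poly poly) \<Rightarrow> 'a poly poly.
       (\<forall>c1 c2. hoch_cocycle2 h c1 \<longrightarrow> hoch_cocycle2 h c2 \<longrightarrow>
           \<Phi> (\<lambda>a b. c1 a b + c2 a b) = \<Phi> c1 + \<Phi> c2) \<and>
       (\<forall>k c. hoch_cocycle2 h c \<longrightarrow> \<Phi> (\<lambda>a b. ascal k (c a b)) = ascal k (\<Phi> c)) \<and>
       (\<forall>a. \<exists>c. hoch_cocycle2 h c \<and> in_ideal h g (\<Phi> c - a)) \<and>
       (\<forall>c. hoch_cocycle2 h c \<longrightarrow> (in_ideal h g (\<Phi> c) \<longleftrightarrow> hoch_coboundary2 h c))"
  proof (intro exI[of _ "Ob h"] conjI allI impI)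
    fix c1 c2 show "Ob h (\<lambda>a b. c1 a b + c2 a b) = Ob h c1 + Ob h c2" by (rule Ob_add)
  next
    fix k c show "Ob h (\<lambda>a b. ascal k (c a b)) = ascal k (Ob h c)" by (rule Ob_ascal)
  next
    fix a show "\<exists>c. hoch_cocycle2 h c \<and> in_ideal h g (Ob h c - a)"
      by (intro exI[of _ "cw h a"]) (simp add: cw_cocycle Ob_cw in_ideal_iff)
  next
    fix c :: "'a poly poly \<Rightarrow> 'a poly poly \<Rightarrow> 'a poly poly" assume "hoch_cocycle2 h c"
    then show "in_ideal h g (Ob h c) = hoch_coboundary2 h c"
      by (simp add: in_ideal_iff g_def Ob_ideal_iff)
  qed
  show "\<exists>\<Psi> :: 'a poly poly \<Rightarrow> 'a poly poly.
       flinear \<Psi> \<and>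
       (\<forall>a b. in_Dker g (\<Psi> (amult h a b) - \<Psi> a * \<Psi> b)) \<and>
       in_Dker g (\<Psi> aone - 1) \<and>
       (\<forall>p. \<exists>a. in_Dker g (\<Psi> a - p)) \<and>
       (\<forall>a. in_Dker g (\<Psi> a) \<longleftrightarrow> in_ideal h g a)"
  proof (intro exI[of _ "\<lambda>a. a"] conjI allI)
    show "flinear (\<lambda>a. a)" by (rule flinear_id)
    fix a b show "in_Dker g (amult h a b - a * b)" by (simp add: in_Dker_def amult_mod gh)
  next
    show "in_Dker g (aone - 1)" by (simp add: in_Dker_def aone_def)
  next
    fix p :: "'a poly poly" show "\<exists>a. in_Dker g (a - p)" by (intro exI[of _ p]) (simp add: in_Dker_def)
  next
    fix a :: "'a poly poly" show "in_Dker g a = in_ideal h g a" by (simp add: in_Dker_def in_ideal_iff)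
  qed
  show "HH2_zero h \<longleftrightarrow> g = 1"
  proof
    assume z: "HH2_zero h"
    show "g = 1"
    proof (rule ccontr)
      assume g1: "g \<noteq> 1"
      have "hoch_coboundary2 h (cw h 1)" using z cw_cocycle by (auto simp: HH2_zero_def)
      then have "[:g:] dvd Ob h (cw h 1)" using gh by (rule cob_dvd_Ob)
      then have "[:g:] dvd [:1:]" by (simp add: Ob_cw pCons_one)
      then have "g dvd 1" by (simp add: const_poly_dvd_const_poly_iff)
      then show False using g_props[of h] g1 by (simp add: g_def)
    qed
  next
    assume g1: "g = 1"
    show "HH2_zero h" unfolding HH2_zero_def
    proof (intro allI impI)
      fix c :: "'a poly poly \<Rightarrow> 'a poly poly \<Rightarrow> 'a poly poly" assume "hoch_cocycle2 h c"
      moreover have "[:g:] dvd Ob h c" using g1 by (simp add: pCons_one)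
      ultimately show "hoch_coboundary2 h c" by (simp add: g_def Ob_ideal_iff)
    qed
  qed
  show "g \<noteq> 1 \<longrightarrow> HH2_infinite_dim h"
  proof
    assume g1: "g \<noteq> 1"
    show "HH2_infinite_dim h" unfolding HH2_infinite_dim_def
    proof (intro allI exI[of _ "\<lambda>i. cw h (monom 1 i)"] conjI impI)
      fix n i :: nat assume "i < n"
      show "hoch_cocycle2 h (cw h (monom 1 i))" by (rule cw_cocycle)
    next
      fix n :: nat and k :: "nat \<Rightarrow> 'a" and i :: nat
      assume cb: "hoch_coboundary2 h (\<lambda>a b. \<Sum>i<n. ascal (k i) (cw h (monom 1 i) a b))" and i: "i < n"
      have "Ob h (\<lambda>a b. \<Sum>i<n. ascal (k i) (cw h (monom 1 i) a b)) = (\<Sum>i<n. ascal (k i) (monom 1 i))"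
        by (simp add: Ob_sum Ob_ascal Ob_cw)
      moreover have "[:g:] dvd Ob h (\<lambda>a b. \<Sum>i<n. ascal (k i) (cw h (monom 1 i) a b))"
        using cb gh by (rule cob_dvd_Ob)
      ultimately have "[:g:] dvd (\<Sum>i<n. ascal (k i) (monom 1 i))" by simp
      then have "g dvd coeff (\<Sum>i<n. ascal (k i) (monom 1 i)) i" by (simp add: const_poly_dvd_iff)
      moreover have "coeff (\<Sum>i<n. ascal (k i) (monom 1 i)) i = [:k i:]"
      proof -
        have "coeff (\<Sum>i<n. ascal (k i) (monom 1 i)) i = (\<Sum>j<n. if j = i then [:k i:] else 0)"
          unfolding coeff_sum by (rule sum.cong) (auto simp: ascal_def coeff_monom one_pCons)
        also have "\<dots> = [:k i:]" using i by simp
        finally show ?thesis .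
      qed
      ultimately have "g dvd [:k i:]" by simp
      then show "k i = 0" using not_dvd_const[of h "k i"] g1 by (simp add: g_def)
    qed
  qed
qed

end
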